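(* For an arbitrary finite undirected graph $G$, the neighborhood complex $\mathcal N(G)$ and the polyhedral complex $\mathrm{Hom}(K_2,G)$ have the same simple homotopy type.
   Context: For $S\subseteq V(G)$, $N(S)$ denotes the set of common neighbors of all vertices in $S$. The neighborhood complex $\mathcal N(G)$ is the simplicial complex whose vertices are the non-isolated vertices of $G$ and whose simplices are the nonempty subsets $S\subseteq V(G)$ with $N(S)\neq\emptyset$. $\Delta^{V(G)}$ is the simplex with vertex set $V(G)$, whose faces are identified with nonempty subsets of $V(G)$. $\mathrm{Hom}(K_2,G)$ is the polyhedral subcomplex of $\Delta^{V(G)}\times\Delta^{V(G)}$ consisting of all cells $\sigma\times\tau$ ($\sigma,\tau\subseteq V(G)$ nonempty) such that $(x,y)\in E(G)$ for all $x\in\sigma,y\in\tau$ (i.e. $(\sigma,\tau)$ is a complete bipartite subgraph of $G$). Two complexes have the same simple homotopy type if they are connected by a finite sequence of elementary collapses and elementary expansions. *)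

theory Defs
  imports "HOL-Analysis.Analysis" "HOL-Library.Function_Algebras"
begin

text \<open>We use the ambient space of functions from an index type to real, so that
  finite polyhedral complexes of arbitrary dimension can be placed in it.\<close>

instantiation "fun" :: (type, real_vector) real_vector
begin
definition scaleR_fun :: "real \<Rightarrow> ('a \<Rightarrow> 'b) \<Rightarrow> 'a \<Rightarrow> 'b" where
  "scaleR_fun r f = (\<lambda>x. r *\<^sub>R f x)"
instance
  by standard (auto simp: scaleR_fun_def fun_eq_iff scaleR_add_right scaleR_add_left)
end

definition affine_rank :: "'a::real_vector set \<Rightarrow> nat" where
  "affine_rank P = (GREATEST n. \<exists>S. S \<subseteq> P \<and> finite S \<and> \<not> affine_dependent S \<and> card S = n)"

definition cell_dim :: "'a::real_vector set \<Rightarrow> int" where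
  "cell_dim P = int (affine_rank P) - 1"

definition polyhedral_complex :: "'a::real_vector set set \<Rightarrow> bool" where
  "polyhedral_complex K \<longleftrightarrow>
     finite K \<and>
     (\<forall>P\<in>K. polytope P \<and> P \<noteq> {}) \<and>
     (\<forall>P\<in>K. \<forall>F. F face_of P \<and> F \<noteq> {} \<longrightarrow> F \<in> K) \<and>
     (\<forall>P\<in>K. \<forall>Q\<in>K. P \<inter> Q = {} \<or> (P \<inter> Q face_of P \<and> P \<inter> Q face_of Q))"

definition elementary_collapse :: "'a::real_vector set set \<Rightarrow> 'a set set \<Rightarrow> bool" where
  "elementary_collapse K L \<longleftrightarrow>
     polyhedral_complex K \<and>
     (\<exists>\<sigma> \<tau>. \<sigma> \<in> K \<and> \<tau> \<in> K \<and> \<sigma> \<subset> \<tau> \<and> cell_dim \<sigma> = cell_dim \<tau> - 1 \<and>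
        (\<forall>\<rho>\<in>K. \<sigma> \<subseteq> \<rho> \<longrightarrow> \<rho> = \<sigma> \<or> \<rho> = \<tau>) \<and>
        L = K - {\<sigma>, \<tau>})"

definition same_simple_homotopy_type :: "'a::real_vector set set \<Rightarrow> 'a set set \<Rightarrow> bool" where
  "same_simple_homotopy_type K L \<longleftrightarrow>
     (\<lambda>A B. elementary_collapse A B \<or> elementary_collapse B A)\<^sup>*\<^sup>* K L"

text \<open>A finite undirected graph: finite vertex set V and symmetric edge set E \<subseteq> V \<times> V.\<close>

definition common_nbrs :: "('v \<times> 'v) set \<Rightarrow> 'v set \<Rightarrow> 'v set" where
  "common_nbrs E S = {y. \<forall>x\<in>S. (x, y) \<in> E}"

definition nbhd_complex :: "'v set \<Rightarrow> ('v \<times> 'v) set \<Rightarrow> 'v set set" where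
  "nbhd_complex V E = {S. S \<noteq> {} \<and> S \<subseteq> V \<and> common_nbrs E S \<noteq> {}}"

definition hom_K2_cells :: "'v set \<Rightarrow> ('v \<times> 'v) set \<Rightarrow> ('v set \<times> 'v set) set" where
  "hom_K2_cells V E = {(\<sigma>, \<tau>). \<sigma> \<noteq> {} \<and> \<tau> \<noteq> {} \<and> \<sigma> \<subseteq> V \<and> \<tau> \<subseteq> V \<and>
                                (\<forall>x\<in>\<sigma>. \<forall>y\<in>\<tau>. (x, y) \<in> E)}"

text \<open>Geometric realization in the ambient space ('v \<times> nat) \<Rightarrow> real:
  vertex x of the i-th copy of \<Delta>^{V} is the unit vector at (x,i).\<close>
definition unit_vec :: "nat \<Rightarrow> 'v \<Rightarrow> ('v \<times> nat) \<Rightarrow> real" where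
  "unit_vec i x = (\<lambda>p. if p = (x, i) then 1 else 0)"

definition std_simplex :: "nat \<Rightarrow> 'v set \<Rightarrow> (('v \<times> nat) \<Rightarrow> real) set" where
  "std_simplex i \<sigma> = convex hull (unit_vec i ` \<sigma>)"

definition nbhd_complex_geom :: "'v set \<Rightarrow> ('v \<times> 'v) set \<Rightarrow> (('v \<times> nat) \<Rightarrow> real) set set" where
  "nbhd_complex_geom V E = std_simplex 0 ` nbhd_complex V E"

text \<open>Geometric Hom(K_2,G) inside \<Delta>^{V(G)} \<times> \<Delta>^{V(G)} (realized on disjoint coordinates,
  so the Minkowski sum is the product cell \<sigma> \<times> \<tau>).\<close>
definition hom_K2_geom :: "'v set \<Rightarrow> ('v \<times> 'v) set \<Rightarrow> (('v \<times> nat) \<Rightarrow> real) set set" where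
  "hom_K2_geom V E =
     (\<lambda>(\<sigma>, \<tau>). {a + b | a b. a \<in> std_simplex 0 \<sigma> \<and> b \<in> std_simplex 1 \<tau>}) ` hom_K2_cells V E"

end

theory Submission
  imports Defs
begin


lemma sum_fun_apply: "(\<Sum>i\<in>I. f i) p = (\<Sum>i\<in>I. f i p)"
  by (induction I rule: infinite_finite_induct) auto

lemma scaleR_fun_apply [simp]: "(c *\<^sub>R f) p = c *\<^sub>R f p"
  by (simp add: scaleR_fun_def)

lemma minus_fun_apply' [simp]: "((f::'a \<Rightarrow> real) - g) p = f p - g p"
  by simp

lemma unit_vec_apply: "unit_vec i a p = (if p = (a, i) then 1 else 0)"
  by (simp add: unit_vec_def)

lemma unit_vec_inj: "inj (unit_vec i)"
proof (rule injI)
  fix a b assume "unit_vec i a = unit_vec i b"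
  then have "unit_vec i a (a,i) = unit_vec i b (a,i)" by simp
  then show "a = b" by (simp add: unit_vec_def split: if_splits)
qed

lemma sum_option_split:
  assumes "finite W"
  shows "(\<Sum>w\<in>W. g w) = (\<Sum>b\<in>Some -` W. g (Some b)) + (if None \<in> W then g None else 0)"
proof -
  have fB: "finite (Some -` W)" using assms by (simp add: finite_vimageI)
  have W: "W = Some ` (Some -` W) \<union> (if None \<in> W then {None} else {})"
    by (auto simp: image_iff) (metis option.exhaust)
  have "(\<Sum>w\<in>W. g w) = (\<Sum>w\<in>Some ` (Some -` W). g w) + (\<Sum>w\<in>(if None \<in> W then {None} else {}). g w)"
    by (subst W, rule sum.union_disjoint) (use assms in auto)
  also have "(\<Sum>w\<in>Some ` (Some -` W). g w) = (\<Sum>b\<in>Some -` W. g (Some b))"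
    by (rule sum.reindex_cong[where l=Some]) auto
  finally show ?thesis by simp
qed

lemma sum_unit_vec:
  assumes "finite A"
  shows "(\<Sum>a\<in>A. f a * unit_vec i a p) = (if snd p = i \<and> fst p \<in> A then f (fst p) else 0)"
proof -
  have "(\<Sum>a\<in>A. f a * unit_vec i a p) = (\<Sum>a\<in>A. if a = fst p then (if snd p = i then f a else 0) else 0)"
    by (rule sum.cong) (auto simp: unit_vec_def)
  also have "\<dots> = (if snd p = i \<and> fst p \<in> A then f (fst p) else 0)"
    using assms by (simp add: sum.delta')
  finally show ?thesis .
qed

lemma simplex_coord:
  fixes A :: "'a set"
  assumes "finite A"
  shows "y \<in> convex hull (unit_vec i ` A) \<longleftrightarrow>
    (\<forall>p. 0 \<le> y p) \<and> (\<forall>p. y p \<noteq> 0 \<longrightarrow> snd p = i \<and> fst p \<in> A) \<and> (\<Sum>a\<in>A. y (a,i)) = 1"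
    (is "?L \<longleftrightarrow> ?R")
proof
  define D :: "('a \<times> nat \<Rightarrow> real) set" where "D = {y. (\<forall>p. 0 \<le> y p) \<and> (\<forall>p. y p \<noteq> 0 \<longrightarrow> snd p = i \<and> fst p \<in> A) \<and> (\<Sum>a\<in>A. y (a,i)) = 1}"
  have "convex D"
  proof (rule convexI)
    fix x y :: "'a \<times> nat \<Rightarrow> real" and u v :: real
    assume x: "x \<in> D" and y: "y \<in> D"
      and u: "0 \<le> u" and v: "0 \<le> v" and uv: "u + v = 1"
    show "u *\<^sub>R x + v *\<^sub>R y \<in> D"
      unfolding D_def mem_Collect_eq
    proof (intro allI conjI impI)
      fix p
      have "0 \<le> x p" using x unfolding D_def by blast
      have "0 \<le> y p" using y unfolding D_def by blast
      then show "0 \<le> (u *\<^sub>R x + v *\<^sub>R y) p" using u v \<open>0 \<le> x p\<close> by simp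
    next
      fix p assume "(u *\<^sub>R x + v *\<^sub>R y) p \<noteq> 0"
      moreover have "x p \<noteq> 0 \<longrightarrow> snd p = i \<and> fst p \<in> A" using x unfolding D_def by blast
      moreover have "y p \<noteq> 0 \<longrightarrow> snd p = i \<and> fst p \<in> A" using y unfolding D_def by blast
      ultimately show "snd p = i" "fst p \<in> A" by (cases "x p = 0"; cases "y p = 0"; simp)+
    next
      show "(\<Sum>a\<in>A. (u *\<^sub>R x + v *\<^sub>R y) (a, i)) = 1"
        using x y uv by (simp add: D_def sum.distrib sum_distrib_left[symmetric])
    qed
  qed
  moreover have "unit_vec i ` A \<subseteq> D"
    using assms by (auto simp: D_def unit_vec_def sum.delta' split: if_splits)
  ultimately have "convex hull (unit_vec i ` A) \<subseteq> D" by (rule hull_minimal[rotated])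
  then show "?L \<Longrightarrow> ?R" by (auto simp: D_def)
next
  assume R: ?R
  have "y = (\<Sum>a\<in>A. y (a,i) *\<^sub>R unit_vec i a)"
  proof
    fix p
    show "y p = (\<Sum>a\<in>A. y (a,i) *\<^sub>R unit_vec i a) p"
      using R by (cases p) (auto simp: sum_fun_apply sum_unit_vec[OF assms])
  qed
  also have "\<dots> \<in> convex hull (unit_vec i ` A)"
    by (rule convex_sum) (use assms R in \<open>auto intro: hull_inc\<close>)
  finally show ?L .
qed

definition vec1 :: "'v option \<Rightarrow> 'v \<times> nat \<Rightarrow> real" where
  "vec1 w = (case w of None \<Rightarrow> 0 | Some b \<Rightarrow> unit_vec 1 b)"

lemma vec1_coord:
  fixes W :: "'v option set"
  assumes W: "finite W"
  shows "c \<in> convex hull (vec1 ` W) \<longleftrightarrow>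
    (\<forall>p. 0 \<le> c p) \<and> (\<forall>p. c p \<noteq> 0 \<longrightarrow> snd p = 1 \<and> Some (fst p) \<in> W) \<and>
    (if None \<in> W then (\<Sum>b\<in>Some -` W. c (b,1)) \<le> 1 else (\<Sum>b\<in>Some -` W. c (b,1)) = 1)"
    (is "?L \<longleftrightarrow> ?R")
proof
  have fB: "finite (Some -` W)" using W by (simp add: finite_vimageI)
  define D :: "('v \<times> nat \<Rightarrow> real) set" where "D = {c. (\<forall>p. 0 \<le> c p) \<and> (\<forall>p. c p \<noteq> 0 \<longrightarrow> snd p = 1 \<and> Some (fst p) \<in> W) \<and>
    (if None \<in> W then (\<Sum>b\<in>Some -` W. c (b,1)) \<le> 1 else (\<Sum>b\<in>Some -` W. c (b,1)) = 1)}"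
  have "convex D"
  proof (rule convexI)
    fix x y :: "'v \<times> nat \<Rightarrow> real" and u v :: real
    assume x: "x \<in> D" and y: "y \<in> D"
      and u: "0 \<le> u" and v: "0 \<le> v" and uv: "u + v = 1"
    show "u *\<^sub>R x + v *\<^sub>R y \<in> D"
      unfolding D_def mem_Collect_eq
    proof (intro allI conjI impI)
      fix p
      have "0 \<le> x p" using x unfolding D_def by blast
      have "0 \<le> y p" using y unfolding D_def by blast
      then show "0 \<le> (u *\<^sub>R x + v *\<^sub>R y) p" using u v \<open>0 \<le> x p\<close> by simp
    next
      fix p assume "(u *\<^sub>R x + v *\<^sub>R y) p \<noteq> 0"
      moreover have "x p \<noteq> 0 \<longrightarrow> snd p = 1 \<and> Some (fst p) \<in> W" using x unfolding D_def by blast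
      moreover have "y p \<noteq> 0 \<longrightarrow> snd p = 1 \<and> Some (fst p) \<in> W" using y unfolding D_def by blast
      ultimately show "snd p = 1" "Some (fst p) \<in> W" by (cases "x p = 0"; cases "y p = 0"; simp)+
    next
      have e: "(\<Sum>b\<in>Some -` W. (u *\<^sub>R x + v *\<^sub>R y) (b,1)) = u * (\<Sum>b\<in>Some -` W. x (b,1)) + v * (\<Sum>b\<in>Some -` W. y (b,1))"
        by (simp add: sum.distrib sum_distrib_left)
      have sx: "if None \<in> W then (\<Sum>b\<in>Some -` W. x (b,1)) \<le> 1 else (\<Sum>b\<in>Some -` W. x (b,1)) = 1"
        using x unfolding D_def by blast
      have sy: "if None \<in> W then (\<Sum>b\<in>Some -` W. y (b,1)) \<le> 1 else (\<Sum>b\<in>Some -` W. y (b,1)) = 1"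
        using y unfolding D_def by blast
      show "if None \<in> W then (\<Sum>b\<in>Some -` W. (u *\<^sub>R x + v *\<^sub>R y) (b,1)) \<le> 1
            else (\<Sum>b\<in>Some -` W. (u *\<^sub>R x + v *\<^sub>R y) (b,1)) = 1"
      proof (cases "None \<in> W")
        case True
        then have "u * (\<Sum>b\<in>Some -` W. x (b,1)) \<le> u * 1" "v * (\<Sum>b\<in>Some -` W. y (b,1)) \<le> v * 1"
          using sx sy u v True by (simp_all add: mult_left_le)
        then show ?thesis using True e uv by simp
      next
        case False
        then show ?thesis using sx sy e uv by simp
      qed
    qed
  qed
  moreover have "vec1 ` W \<subseteq> D"
  proof
    fix c assume "c \<in> vec1 ` W"
    then obtain w where w: "w \<in> W" "c = vec1 w" by auto
    show "c \<in> D"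
    proof (cases w)
      case None
      then show ?thesis using w by (simp add: D_def vec1_def)
    next
      case (Some b)
      have "(\<Sum>b'\<in>Some -` W. unit_vec 1 b (b',1)) = (\<Sum>b'\<in>Some -` W. if b' = b then 1 else 0)"
        by (rule sum.cong) (auto simp: unit_vec_def)
      also have "\<dots> = 1" using fB w Some by (simp add: sum.delta')
      finally show ?thesis using w Some by (auto simp: D_def vec1_def unit_vec_def)
    qed
  qed
  ultimately have "convex hull (vec1 ` W) \<subseteq> D" by (rule hull_minimal[rotated])
  then show "?L \<Longrightarrow> ?R" by (auto simp: D_def)
next
  assume R: ?R
  have fB: "finite (Some -` W)" using W by (simp add: finite_vimageI)
  define s where "s = (\<Sum>b\<in>Some -` W. c (b,1))"
  define om where "om w = (case w of None \<Rightarrow> 1 - s | Some b \<Rightarrow> c (b,1))" for w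
  have "c = (\<Sum>w\<in>W. om w *\<^sub>R vec1 w)"
  proof
    fix p
    have "(\<Sum>w\<in>W. om w *\<^sub>R vec1 w) p = (\<Sum>w\<in>W. om w * vec1 w p)"
      by (simp add: sum_fun_apply)
    also have "\<dots> = (\<Sum>b\<in>Some -` W. c (b,1) * unit_vec 1 b p)"
      by (subst sum_option_split[OF W]) (simp add: om_def vec1_def)
    also have "\<dots> = c p"
      using R by (cases p) (auto simp: sum_unit_vec[OF fB])
    finally show "c p = (\<Sum>w\<in>W. om w *\<^sub>R vec1 w) p" by simp
  qed
  also have "\<dots> \<in> convex hull (vec1 ` W)"
  proof (rule convex_sum)
    show "(\<Sum>i\<in>W. om i) = 1"
      using R by (subst sum_option_split[OF W]) (auto simp: om_def s_def)
    show "\<And>i. i \<in> W \<Longrightarrow> 0 \<le> om i"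
      using R by (auto simp: om_def s_def split: option.splits)
  qed (use W in \<open>auto intro: hull_inc\<close>)
  finally show ?L .
qed



definition inC :: "'v set \<Rightarrow> 'v option set \<Rightarrow> ('v \<times> nat \<Rightarrow> real) \<Rightarrow> bool" where
  "inC A W x \<longleftrightarrow> (\<forall>p. 0 \<le> x p) \<and>
     (\<forall>p. x p \<noteq> 0 \<longrightarrow> (snd p = 0 \<and> fst p \<in> A) \<or> (snd p = 1 \<and> Some (fst p) \<in> W)) \<and>
     (\<Sum>a\<in>A. x (a,0)) = 1 \<and>
     (if None \<in> W then (\<Sum>b\<in>Some -` W. x (b,1)) \<le> 1 else (\<Sum>b\<in>Some -` W. x (b,1)) = 1)"

definition cellM :: "'v set \<Rightarrow> 'v option set \<Rightarrow> ('v \<times> nat \<Rightarrow> real) set" where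
  "cellM A W = std_simplex 0 A + convex hull (vec1 ` W)"

lemma cellM_coord:
  fixes A :: "'v set" and W :: "'v option set"
  assumes A: "finite A" and W: "finite W"
  shows "x \<in> cellM A W \<longleftrightarrow> inC A W x"
proof
  assume "x \<in> cellM A W"
  then obtain a c where x: "x = a + c" and a: "a \<in> convex hull (unit_vec 0 ` A)"
    and c: "c \<in> convex hull (vec1 ` W)"
    by (auto simp: cellM_def std_simplex_def set_plus_def)
  note a' = a[unfolded simplex_coord[OF A]]
  note c' = c[unfolded vec1_coord[OF W]]
  have a0: "a (v, 1) = 0" for v using a' by fastforce
  have c0: "c (v, 0) = 0" for v using c' by fastforce
  show "inC A W x"
    unfolding inC_def
  proof (intro conjI allI impI)
    fix p
    show "0 \<le> x p" using a' c' x by (cases p) (simp add: add_nonneg_nonneg)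
  next
    fix p assume "x p \<noteq> 0"
    then have "a p \<noteq> 0 \<or> c p \<noteq> 0" using x by auto
    then show "snd p = 0 \<and> fst p \<in> A \<or> snd p = 1 \<and> Some (fst p) \<in> W"
      using a' c' by blast
  next
    show "(\<Sum>a\<in>A. x (a, 0)) = 1" using a' x c0 by simp
  next
    show "if None \<in> W then (\<Sum>b\<in>Some -` W. x (b,1)) \<le> 1 else (\<Sum>b\<in>Some -` W. x (b,1)) = 1"
    proof -
      have "(\<Sum>b\<in>Some -` W. x (b,1)) = (\<Sum>b\<in>Some -` W. c (b,1))" using x a0 by simp
      then show ?thesis using conjunct2[OF conjunct2[OF c']] by (simp only:)
    qed
  qed
next
  assume xin: "inC A W x"
  note x' = xin[unfolded inC_def]
  define a where "a = (\<lambda>p. if snd p = 0 then x p else 0)"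
  define c where "c = (\<lambda>p. if snd p = 1 then x p else 0)"
  have "x = a + c"
  proof
    fix p show "x p = (a + c) p"
      using x' by (cases p; cases "x p = 0") (auto simp: a_def c_def)
  qed
  moreover have "a \<in> convex hull (unit_vec 0 ` A)"
    unfolding simplex_coord[OF A] using x' by (auto simp: a_def)
  moreover have "c \<in> convex hull (vec1 ` W)"
    unfolding vec1_coord[OF W] using x' by (auto simp: c_def)
  ultimately show "x \<in> cellM A W"
    by (auto simp: cellM_def std_simplex_def set_plus_def)
qed

lemma inC_nonneg: "inC A W x \<Longrightarrow> 0 \<le> x p"
  unfolding inC_def by blast

lemma inC_supp: "inC A W x \<Longrightarrow> x (v,i) \<noteq> 0 \<Longrightarrow> (i = 0 \<and> v \<in> A) \<or> (i = 1 \<and> Some v \<in> W)"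
  unfolding inC_def by fastforce

lemma inC_supp0: "inC A W x \<Longrightarrow> v \<notin> A \<Longrightarrow> x (v,0) = 0"
  using inC_supp by fastforce

lemma inC_supp1: "inC A W x \<Longrightarrow> Some v \<notin> W \<Longrightarrow> x (v,1) = 0"
  using inC_supp by fastforce

lemma inC_suppo: "inC A W x \<Longrightarrow> i \<noteq> 0 \<Longrightarrow> i \<noteq> 1 \<Longrightarrow> x (v,i) = 0"
  using inC_supp by fastforce

lemma inC_sum0: "inC A W x \<Longrightarrow> (\<Sum>a\<in>A. x (a,0)) = 1"
  unfolding inC_def by blast

lemma inC_sum1: "inC A W x \<Longrightarrow> (\<Sum>b\<in>Some -` W. x (b,1)) \<le> 1"
  unfolding inC_def by (auto split: if_splits)

lemma inC_sum1N: "inC A W x \<Longrightarrow> None \<notin> W \<Longrightarrow> (\<Sum>b\<in>Some -` W. x (b,1)) = 1"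
  unfolding inC_def by (auto split: if_splits)

lemma inCI:
  assumes "\<And>p. 0 \<le> x p"
    and "\<And>v i. x (v,i) \<noteq> 0 \<Longrightarrow> (i = 0 \<and> v \<in> A) \<or> (i = 1 \<and> Some v \<in> W)"
    and "(\<Sum>a\<in>A. x (a,0)) = 1"
    and "(\<Sum>b\<in>Some -` W. x (b,1)) \<le> 1"
    and "None \<notin> W \<Longrightarrow> (\<Sum>b\<in>Some -` W. x (b,1)) = 1"
  shows "inC A W x"
  unfolding inC_def using assms by (auto split: prod.splits)

lemma finite_vimage_Some: "finite W \<Longrightarrow> finite (Some -` W)"
  by (simp add: finite_vimageI)

lemma sum_supp_eq:
  assumes "finite T" "S \<subseteq> T" "\<And>t. t \<in> T \<Longrightarrow> t \<notin> S \<Longrightarrow> f t = 0"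
  shows "sum f T = sum f S"
  using assms by (intro sum.mono_neutral_right) auto

lemma inC_Int:
  assumes "finite A1" "finite A2" "finite W1" "finite W2"
  shows "inC A1 W1 x \<and> inC A2 W2 x \<longleftrightarrow> inC (A1 \<inter> A2) (W1 \<inter> W2) x"
proof
  assume h: "inC A1 W1 x \<and> inC A2 W2 x"
  then have h1: "inC A1 W1 x" and h2: "inC A2 W2 x" by auto
  have s0: "(\<Sum>a\<in>A1. x (a,0)) = (\<Sum>a\<in>A1 \<inter> A2. x (a,0))"
    by (rule sum_supp_eq) (use assms inC_supp0[OF h2] in auto)
  have s1: "(\<Sum>b\<in>Some -` W1. x (b,1)) = (\<Sum>b\<in>Some -` (W1 \<inter> W2). x (b,1))"
    by (rule sum_supp_eq) (use assms inC_supp1[OF h2] finite_vimage_Some in auto)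
  have s2: "(\<Sum>b\<in>Some -` W2. x (b,1)) = (\<Sum>b\<in>Some -` (W1 \<inter> W2). x (b,1))"
    by (rule sum_supp_eq) (use assms inC_supp1[OF h1] finite_vimage_Some in auto)
  show "inC (A1 \<inter> A2) (W1 \<inter> W2) x"
  proof (rule inCI)
    show "0 \<le> x p" for p using inC_nonneg[OF h1] .
    show "(i = 0 \<and> v \<in> A1 \<inter> A2) \<or> (i = 1 \<and> Some v \<in> W1 \<inter> W2)" if "x (v,i) \<noteq> 0" for v i
      using inC_supp[OF h1 that] inC_supp[OF h2 that] by auto
    show "(\<Sum>a\<in>A1 \<inter> A2. x (a,0)) = 1" using s0 inC_sum0[OF h1] by simp
    show "(\<Sum>b\<in>Some -` (W1 \<inter> W2). x (b,1)) \<le> 1" using s1 inC_sum1[OF h1] by simp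
    show "(\<Sum>b\<in>Some -` (W1 \<inter> W2). x (b,1)) = 1" if "None \<notin> W1 \<inter> W2"
    proof (cases "None \<in> W1")
      case True
      then have "None \<notin> W2" using that by auto
      then show ?thesis using s2 inC_sum1N[OF h2] by simp
    next
      case False
      then show ?thesis using s1 inC_sum1N[OF h1] by simp
    qed
  qed
next
  assume h: "inC (A1 \<inter> A2) (W1 \<inter> W2) x"
  have s0: "(\<Sum>a\<in>A. x (a,0)) = (\<Sum>a\<in>A1 \<inter> A2. x (a,0))" if "A = A1 \<or> A = A2" "finite A" for A
    by (rule sum_supp_eq) (use that inC_supp0[OF h] in auto)
  have s1: "(\<Sum>b\<in>Some -` W. x (b,1)) = (\<Sum>b\<in>Some -` (W1 \<inter> W2). x (b,1))" if "W = W1 \<or> W = W2" "finite W" for W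
    by (rule sum_supp_eq) (use that inC_supp1[OF h] finite_vimage_Some in auto)
  have "inC A W x" if "A = A1 \<and> W = W1 \<or> A = A2 \<and> W = W2" "finite A" "finite W" for A W
  proof (rule inCI)
    show "0 \<le> x p" for p using inC_nonneg[OF h] .
    show "(i = 0 \<and> v \<in> A) \<or> (i = 1 \<and> Some v \<in> W)" if "x (v,i) \<noteq> 0" for v i
      using inC_supp[OF h that] \<open>A = A1 \<and> W = W1 \<or> A = A2 \<and> W = W2\<close> by auto
    show "(\<Sum>a\<in>A. x (a,0)) = 1" using s0[of A] that inC_sum0[OF h] by auto
    show "(\<Sum>b\<in>Some -` W. x (b,1)) \<le> 1" using s1[of W] that inC_sum1[OF h] by auto
    show "(\<Sum>b\<in>Some -` W. x (b,1)) = 1" if "None \<notin> W"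
      using s1[of W] \<open>A = A1 \<and> W = W1 \<or> A = A2 \<and> W = W2\<close> \<open>finite W\<close> inC_sum1N[OF h] that by auto
  qed
  then show "inC A1 W1 x \<and> inC A2 W2 x" using assms by blast
qed

lemma cellM_Int:
  assumes "finite A1" "finite A2" "finite W1" "finite W2"
  shows "cellM A1 W1 \<inter> cellM A2 W2 = cellM (A1 \<inter> A2) (W1 \<inter> W2)"
  using assms by (auto simp: cellM_coord inC_Int[symmetric])

lemma vertex_in_cellM:
  "a \<in> A \<Longrightarrow> w \<in> W \<Longrightarrow> unit_vec 0 a + vec1 w \<in> cellM A W"
  unfolding cellM_def std_simplex_def set_plus_def by (blast intro: hull_inc)

lemma cellM_nonempty: "cellM A W \<noteq> {} \<longleftrightarrow> A \<noteq> {} \<and> W \<noteq> {}"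
proof
  assume "A \<noteq> {} \<and> W \<noteq> {}"
  then obtain a w where "a \<in> A" "w \<in> W" by auto
  then show "cellM A W \<noteq> {}" using vertex_in_cellM[of a A w W] by auto
qed (auto simp: cellM_def std_simplex_def set_plus_def)

lemma cellM_mono: "A \<subseteq> A' \<Longrightarrow> W \<subseteq> W' \<Longrightarrow> cellM A W \<subseteq> cellM A' W'"
  unfolding cellM_def std_simplex_def set_plus_def
  by (smt (verit, best) Collect_mono_iff hull_mono image_mono subset_iff)

lemma cellM_subset_iff:
  assumes "finite A'" "finite W'" "A \<noteq> {}" "W \<noteq> {}"
  shows "cellM A W \<subseteq> cellM A' W' \<longleftrightarrow> A \<subseteq> A' \<and> W \<subseteq> W'"
proof
  assume sub: "cellM A W \<subseteq> cellM A' W'"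
  have *: "inC A' W' (unit_vec 0 a + vec1 w)" if "a \<in> A" "w \<in> W" for a w
    using sub vertex_in_cellM[OF that] cellM_coord[OF assms(1,2)] by blast
  obtain a0 where a0: "a0 \<in> A" using assms by auto
  obtain w0 where w0: "w0 \<in> W" using assms by auto
  have "A \<subseteq> A'"
  proof
    fix a assume a: "a \<in> A"
    have "(unit_vec 0 a + vec1 w0) (a,0) \<noteq> 0" by (simp add: unit_vec_def vec1_def split: option.splits)
    then show "a \<in> A'" using inC_supp[OF *[OF a w0]] by auto
  qed
  moreover have "W \<subseteq> W'"
  proof
    fix w assume w: "w \<in> W"
    show "w \<in> W'"
    proof (cases w)
      case None
      have "(\<Sum>b\<in>Some -` W'. (unit_vec 0 a0 + vec1 w) (b,1)) = 0"
        using None by (simp add: unit_vec_def vec1_def)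
      then show ?thesis using inC_sum1N[OF *[OF a0 w]] None by (cases "None \<in> W'") auto
    next
      case (Some b)
      have "(unit_vec 0 a0 + vec1 w) (b,1) \<noteq> 0" using Some by (simp add: unit_vec_def vec1_def)
      then show ?thesis using inC_supp[OF *[OF a0 w]] Some by auto
    qed
  qed
  ultimately show "A \<subseteq> A' \<and> W \<subseteq> W'" by blast
qed (use cellM_mono in blast)

lemma cellM_polytope: "finite A \<Longrightarrow> finite W \<Longrightarrow> polytope (cellM A W)"
  unfolding cellM_def std_simplex_def convex_hull_set_plus[symmetric]
  by (rule polytope_convex_hull) (simp add: finite_set_plus)



lemma comb_zero:
  fixes s t \<alpha> \<beta> :: real
  assumes "0 < s" "0 < t" "s * \<alpha> + t * \<beta> = 0" "0 \<le> \<alpha>" "0 \<le> \<beta>"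
  shows "\<alpha> = 0"
proof -
  have "0 \<le> s * \<alpha>" "0 \<le> t * \<beta>" using assms by simp_all
  then have "s * \<alpha> = 0" using assms by linarith
  then show ?thesis using assms by simp
qed

lemma comb_one:
  fixes s t \<alpha> \<beta> :: real
  assumes "0 < s" "0 < t" "s + t = 1" "s * \<alpha> + t * \<beta> = 1" "\<alpha> \<le> 1" "\<beta> \<le> 1"
  shows "\<alpha> = 1"
proof -
  have "s * (1 - \<alpha>) + t * (1 - \<beta>) = 0" using assms by (simp add: algebra_simps)
  then have "1 - \<alpha> = 0" using comb_zero[of s t "1 - \<alpha>" "1 - \<beta>"] assms by simp
  then show ?thesis by simp
qed

lemma cellM_convex: "finite A \<Longrightarrow> finite W \<Longrightarrow> convex (cellM A W)"
  using cellM_polytope polytope_imp_convex by blast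

lemma face_seg:
  assumes fin: "finite A" "finite W" and sub: "A' \<subseteq> A" "W' \<subseteq> W"
    and a: "inC A W a" and b: "inC A W b" and x: "inC A' W' x"
    and st: "0 < s" "0 < t" "s + t = 1" and xe: "x = s *\<^sub>R a + t *\<^sub>R b"
  shows "inC A' W' a"
proof -
  have xp: "x p = s * a p + t * b p" for p using xe by simp
  have fA': "finite A'" using fin sub finite_subset by blast
  have fW': "finite W'" using fin sub finite_subset by blast
  have z: "a (v,i) = 0" if "x (v,i) = 0" for v i
    using comb_zero[OF st(1,2), of "a (v,i)" "b (v,i)"] xp[of "(v,i)"] that inC_nonneg[OF a] inC_nonneg[OF b]
    by simp
  have s0: "(\<Sum>c\<in>A. a (c,0)) = (\<Sum>c\<in>A'. a (c,0))"
    by (rule sum_supp_eq) (use fin sub z inC_supp0[OF x] in auto)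
  have s1: "(\<Sum>c\<in>Some -` W. y (c,1)) = (\<Sum>c\<in>Some -` W'. y (c,1))"
    if "\<And>c. Some c \<in> W \<Longrightarrow> Some c \<notin> W' \<Longrightarrow> y (c,1) = 0" for y
    by (rule sum_supp_eq) (use fin sub that finite_vimage_Some in auto)
  have s1a: "(\<Sum>c\<in>Some -` W. a (c,1)) = (\<Sum>c\<in>Some -` W'. a (c,1))"
    by (rule s1) (use z inC_supp1[OF x] in auto)
  show ?thesis
  proof (rule inCI)
    show "0 \<le> a p" for p using inC_nonneg[OF a] .
    show "(i = 0 \<and> v \<in> A') \<or> (i = 1 \<and> Some v \<in> W')" if "a (v,i) \<noteq> 0" for v i
      using that z[of v i] inC_supp[OF x, of v i] by auto
    show "(\<Sum>c\<in>A'. a (c,0)) = 1" using s0 inC_sum0[OF a] by simp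
    show "(\<Sum>c\<in>Some -` W'. a (c,1)) \<le> 1" using s1a inC_sum1[OF a] by simp
    show "(\<Sum>c\<in>Some -` W'. a (c,1)) = 1" if "None \<notin> W'"
    proof (cases "None \<in> W")
      case False
      then show ?thesis using s1a inC_sum1N[OF a] by simp
    next
      case True
      have s1b: "(\<Sum>c\<in>Some -` W. b (c,1)) = (\<Sum>c\<in>Some -` W'. b (c,1))"
      proof (rule s1)
        fix c assume "Some c \<in> W" "Some c \<notin> W'"
        then have "x (c,1) = 0" using inC_supp1[OF x] by auto
        then show "b (c,1) = 0"
          using comb_zero[OF st(2,1), of "b (c,1)" "a (c,1)"] xp[of "(c,1)"] inC_nonneg[OF a] inC_nonneg[OF b]
          by (simp add: add.commute)
      qed
      have "(\<Sum>c\<in>Some -` W'. x (c,1)) = s * (\<Sum>c\<in>Some -` W'. a (c,1)) + t * (\<Sum>c\<in>Some -` W'. b (c,1))"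
        by (simp add: xp sum.distrib sum_distrib_left)
      then show ?thesis
        using comb_one[OF st] inC_sum1N[OF x that] inC_sum1[OF a] inC_sum1[OF b] s1a s1b by simp
    qed
  qed
qed

lemma cellM_face_of:
  assumes fin: "finite A" "finite W" and sub: "A' \<subseteq> A" "W' \<subseteq> W"
  shows "cellM A' W' face_of cellM A W"
  unfolding face_of_def
proof (intro conjI ballI impI)
  have fA': "finite A'" using fin sub finite_subset by blast
  have fW': "finite W'" using fin sub finite_subset by blast
  show "cellM A' W' \<subseteq> cellM A W" using cellM_mono sub by blast
  show "convex (cellM A' W')" using cellM_convex fA' fW' by blast
  fix a b x assume a: "a \<in> cellM A W" and b: "b \<in> cellM A W" and x: "x \<in> cellM A' W'"
    and seg: "x \<in> open_segment a b"
  from seg obtain u where u: "0 < u" "u < 1" "x = (1 - u) *\<^sub>R a + u *\<^sub>R b"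
    by (auto simp: in_segment)
  note a' = a[unfolded cellM_coord[OF fin]] and b' = b[unfolded cellM_coord[OF fin]]
    and x' = x[unfolded cellM_coord[OF fA' fW']]
  have "inC A' W' a"
    by (rule face_seg[OF fin sub a' b' x', of "1 - u" u]) (use u in auto)
  moreover have "inC A' W' b"
    by (rule face_seg[OF fin sub b' a' x', of u "1 - u"]) (use u in auto)
  ultimately show "a \<in> cellM A' W'" "b \<in> cellM A' W'"
    by (simp_all add: cellM_coord[OF fA' fW'])
qed



lemma inC_le1_0: "inC A W y \<Longrightarrow> finite A \<Longrightarrow> y (v,0) \<le> 1"
proof -
  assume y: "inC A W y" and fA: "finite A"
  show ?thesis
  proof (cases "v \<in> A")
    case True
    have "y (v,0) \<le> (\<Sum>a\<in>A. y (a,0))"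
      by (rule member_le_sum) (use True fA inC_nonneg[OF y] in auto)
    then show ?thesis using inC_sum0[OF y] by simp
  next
    case False then show ?thesis using inC_supp0[OF y] by simp
  qed
qed

lemma inC_le1_1: "inC A W y \<Longrightarrow> finite W \<Longrightarrow> y (v,1) \<le> 1"
proof -
  assume y: "inC A W y" and fW: "finite W"
  show ?thesis
  proof (cases "Some v \<in> W")
    case True
    have "y (v,1) \<le> (\<Sum>b\<in>Some -` W. y (b,1))"
      by (rule member_le_sum) (use True fW finite_vimage_Some inC_nonneg[OF y] in auto)
    then show ?thesis using inC_sum1[OF y] by simp
  next
    case False then show ?thesis using inC_supp1[OF y] by simp
  qed
qed

lemma face_is_cellM:
  fixes A :: "'v set" and W :: "'v option set"
  assumes fin: "finite A" "finite W" and F: "F face_of cellM A W" and Fne: "F \<noteq> {}"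
  shows "\<exists>A' W'. A' \<subseteq> A \<and> W' \<subseteq> W \<and> F = cellM A' W'"
proof -
  have FC: "F \<subseteq> cellM A W" using F face_of_imp_subset by blast
  have inF: "inC A W x" if "x \<in> F" for x using that FC cellM_coord[OF fin] by blast
  define B where "B = Some -` W"
  have fB: "finite B" using fin by (simp add: B_def finite_vimage_Some)
  define A' where "A' = {a\<in>A. \<exists>x\<in>F. x (a,0) \<noteq> 0}"
  define B' where "B' = {b\<in>B. \<exists>x\<in>F. x (b,1) \<noteq> 0}"
  define nz where "nz \<longleftrightarrow> None \<in> W \<and> (\<exists>x\<in>F. (\<Sum>b\<in>B. x (b,1)) < 1)"
  define W' where "W' = Some ` B' \<union> (if nz then {None} else {})"
  have A'A: "A' \<subseteq> A" by (auto simp: A'_def)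
  have B'B: "B' \<subseteq> B" by (auto simp: B'_def)
  have W'W: "W' \<subseteq> W" by (auto simp: W'_def B'_def B_def nz_def)
  have fA': "finite A'" using A'A fin finite_subset by blast
  have fB': "finite B'" using B'B fB finite_subset by blast
  have fW': "finite W'" using W'W fin finite_subset by blast
  have vW': "Some -` W' = B'" by (auto simp: W'_def)
  have NW': "None \<in> W' \<longleftrightarrow> nz" by (auto simp: W'_def)
  have sumF: "(\<Sum>b\<in>B. x (b,1)) = (\<Sum>b\<in>B'. x (b,1))" if "x \<in> F" for x
    by (rule sum_supp_eq) (use fB B'B that in \<open>auto simp: B'_def\<close>)
  have F_sub: "inC A' W' x" if xF: "x \<in> F" for x
  proof (rule inCI)
    note xi = inF[OF xF]
    show "0 \<le> x p" for p using inC_nonneg[OF xi] .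
    show "(i = 0 \<and> v \<in> A') \<or> (i = 1 \<and> Some v \<in> W')" if "x (v,i) \<noteq> 0" for v i
      using inC_supp[OF xi that] that xF by (auto simp: A'_def B'_def W'_def B_def)
    have "(\<Sum>a\<in>A. x (a,0)) = (\<Sum>a\<in>A'. x (a,0))"
      by (rule sum_supp_eq) (use fin A'A xF in \<open>auto simp: A'_def\<close>)
    then show "(\<Sum>a\<in>A'. x (a,0)) = 1" using inC_sum0[OF xi] by simp
    show "(\<Sum>b\<in>Some -` W'. x (b,1)) \<le> 1" using sumF[OF xF] inC_sum1[OF xi] vW' by (simp add: B_def)
    show "(\<Sum>b\<in>Some -` W'. x (b,1)) = 1" if "None \<notin> W'"
    proof (cases "None \<in> W")
      case False
      then show ?thesis using sumF[OF xF] inC_sum1N[OF xi] vW' by (simp add: B_def)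
    next
      case True
      then have "\<not> (\<Sum>b\<in>B. x (b,1)) < 1" using that NW' xF by (auto simp: nz_def)
      then show ?thesis using sumF[OF xF] inC_sum1[OF xi] vW' by (simp add: B_def)
    qed
  qed
  (* step (ii): a relative interior point *)
  obtain x0 where x0: "x0 \<in> F" using Fne by auto
  have "\<forall>a\<in>A'. \<exists>x. x \<in> F \<and> x (a,0) \<noteq> 0" by (auto simp: A'_def)
  then obtain wa where wa: "\<forall>a\<in>A'. wa a \<in> F \<and> wa a (a,0) \<noteq> 0" by (metis bchoice)
  have "\<forall>b\<in>B'. \<exists>x. x \<in> F \<and> x (b,1) \<noteq> 0" by (auto simp: B'_def)
  then obtain wb where wb: "\<forall>b\<in>B'. wb b \<in> F \<and> wb b (b,1) \<noteq> 0" by (metis bchoice)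
  obtain wz where wz: "nz \<longrightarrow> wz \<in> F \<and> (\<Sum>b\<in>B. wz (b,1)) < 1" by (auto simp: nz_def)
  define S where "S = insert x0 (wa ` A' \<union> wb ` B' \<union> (if nz then {wz} else {}))"
  have SF: "S \<subseteq> F" using x0 wa wb wz by (auto simp: S_def)
  have fS: "finite S" using fA' fB' by (simp add: S_def)
  define n where "n = card S"
  have npos: "0 < n" using fS by (auto simp: n_def S_def card_gt_0_iff)
  define xs where "xs = (\<Sum>y\<in>S. (1 / real n) *\<^sub>R y)"
  have xsF: "xs \<in> F"
    unfolding xs_def
  proof (rule convex_sum)
    show "convex F" using F face_of_imp_convex by blast
    show "(\<Sum>i\<in>S. 1 / real n) = 1" using npos by (simp add: n_def)
  qed (use fS SF npos in auto)
  have xsp: "xs p = (1 / real n) * (\<Sum>y\<in>S. y p)" for p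
    by (simp add: xs_def sum_fun_apply sum_distrib_left)
  have Snn: "0 \<le> y p" if "y \<in> S" for y p using that SF inF inC_nonneg by blast
  have xspos: "0 < xs p" if "y0 \<in> S" "y0 p \<noteq> 0" for y0 p
  proof -
    have "y0 p \<le> (\<Sum>y\<in>S. y p)" by (rule member_le_sum) (use that fS Snn in auto)
    moreover have "0 < y0 p" using Snn[of y0 p] that by (simp add: less_le)
    ultimately show ?thesis using npos by (simp add: xsp)
  qed
  have xsA: "0 < xs (a,0)" if "a \<in> A'" for a
    by (rule xspos[of "wa a"]) (use that wa in \<open>auto simp: S_def\<close>)
  have xsB: "0 < xs (b,1)" if "b \<in> B'" for b
    by (rule xspos[of "wb b"]) (use that wb in \<open>auto simp: S_def\<close>)
  have xsz: "(\<Sum>b\<in>B'. xs (b,1)) < 1" if nz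
  proof -
    have "(\<Sum>b\<in>B'. xs (b,1)) = (1 / real n) * (\<Sum>y\<in>S. (\<Sum>b\<in>B'. y (b,1)))"
      by (simp add: xsp sum_distrib_left[symmetric] sum.swap[of _ B'] sum_divide_distrib[symmetric])
    moreover have "(\<Sum>y\<in>S. (\<Sum>b\<in>B'. y (b,1))) < (\<Sum>y\<in>S. 1)"
    proof (rule sum_strict_mono_ex1[OF fS])
      show "\<forall>y\<in>S. (\<Sum>b\<in>B'. y (b,1)) \<le> 1"
        using SF sumF inF inC_sum1 by (fastforce simp: B_def)
      show "\<exists>y\<in>S. (\<Sum>b\<in>B'. y (b,1)) < 1"
        using wz that sumF by (auto simp: S_def)
    qed
    ultimately have "real n * (\<Sum>b\<in>B'. xs (b,1)) < real n * 1" using npos by (simp add: n_def)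
    then show ?thesis using npos by simp
  qed
  have xsC: "inC A' W' xs" using F_sub[OF xsF] .
  have C_sub: "y \<in> F" if yC: "inC A' W' y" for y
  proof (cases "y = xs")
    case True then show ?thesis using xsF by simp
  next
    case False
    define Sl where "Sl = (\<lambda>a. xs (a,0)) ` A' \<union> (\<lambda>b. xs (b,1)) ` B' \<union> (if nz then {1 - (\<Sum>b\<in>B'. xs (b,1))} else {})"
    have A'ne: "A' \<noteq> {}" using inC_sum0[OF xsC] by auto
    have fSl: "finite Sl" using fA' fB' by (simp add: Sl_def)
    have Slne: "Sl \<noteq> {}" using A'ne by (simp add: Sl_def)
    define e where "e = Min Sl"
    have epos: "0 < e" unfolding e_def using fSl Slne xsA xsB xsz
      by (subst Min_gr_iff) (auto simp: Sl_def)
    have eA: "e \<le> xs (a,0)" if "a \<in> A'" for a unfolding e_def using fSl that by (intro Min_le) (auto simp: Sl_def)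
    have eB: "e \<le> xs (b,1)" if "b \<in> B'" for b unfolding e_def using fSl that by (intro Min_le) (auto simp: Sl_def)
    have ez: "e \<le> 1 - (\<Sum>b\<in>B'. xs (b,1))" if nz unfolding e_def using fSl that by (intro Min_le) (auto simp: Sl_def)
    define z where "z = (1 + e) *\<^sub>R xs - e *\<^sub>R y"
    have zp: "z p = (1 + e) * xs p - e * y p" for p by (simp add: z_def)
    have key: "e \<le> xs (v,i) \<and> y (v,i) \<le> 1" if "xs (v,i) \<noteq> 0 \<or> y (v,i) \<noteq> 0" for v i
    proof -
      have "(i = 0 \<and> v \<in> A') \<or> (i = 1 \<and> Some v \<in> W')"
        using that inC_supp[OF xsC, of v i] inC_supp[OF yC, of v i] by blast
      then show ?thesis
      proof
        assume "i = 0 \<and> v \<in> A'"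
        then show ?thesis using eA[of v] inC_le1_0[OF yC fA', of v] by simp
      next
        assume h: "i = 1 \<and> Some v \<in> W'"
        then have "v \<in> B'" using vW' by blast
        then show ?thesis using h eB[of v] inC_le1_1[OF yC fW', of v] by simp
      qed
    qed
    have zC: "inC A' W' z"
    proof (rule inCI)
      fix p :: "'v \<times> nat"
      obtain v i where p: "p = (v,i)" by (cases p)
      show "0 \<le> z p"
      proof (cases "xs (v,i) \<noteq> 0 \<or> y (v,i) \<noteq> 0")
        case True
        then have k: "e \<le> xs (v,i)" "y (v,i) \<le> 1" using key by blast+
        have "e * y (v,i) \<le> e" using k epos mult_left_le[of "y (v,i)" e] by simp
        moreover have "0 \<le> e * xs (v,i)" using k epos by simp
        ultimately show ?thesis using k p by (simp add: zp algebra_simps)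
      next
        case False then show ?thesis using p by (simp add: zp)
      qed
    next
      fix v i assume "z (v,i) \<noteq> 0"
      then have "xs (v,i) \<noteq> 0 \<or> y (v,i) \<noteq> 0" by (auto simp: zp)
      then show "(i = 0 \<and> v \<in> A') \<or> (i = 1 \<and> Some v \<in> W')"
        using inC_supp[OF xsC, of v i] inC_supp[OF yC, of v i] by blast
    next
      show "(\<Sum>a\<in>A'. z (a,0)) = 1"
        using inC_sum0[OF xsC] inC_sum0[OF yC]
        by (simp add: zp sum_subtractf sum_distrib_left[symmetric])
    next
      have sz: "(\<Sum>b\<in>B'. z (b,1)) = (1 + e) * (\<Sum>b\<in>B'. xs (b,1)) - e * (\<Sum>b\<in>B'. y (b,1))"
        by (simp add: zp sum_subtractf sum_distrib_left[symmetric])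
      show "(\<Sum>b\<in>Some -` W'. z (b,1)) \<le> 1"
      proof (cases nz)
        case True
        have sx: "0 \<le> (\<Sum>b\<in>B'. xs (b,1))" "(\<Sum>b\<in>B'. xs (b,1)) \<le> 1"
          using inC_sum1[OF xsC] vW' by (auto intro: sum_nonneg inC_nonneg[OF xsC])
        have sy: "0 \<le> (\<Sum>b\<in>B'. y (b,1))" by (auto intro: sum_nonneg inC_nonneg[OF yC])
        have "e * (\<Sum>b\<in>B'. xs (b,1)) \<le> e" using sx epos mult_left_le by simp
        moreover have "0 \<le> e * (\<Sum>b\<in>B'. y (b,1))" using sy epos by simp
        ultimately show ?thesis using ez[OF True] vW' sz by (simp add: algebra_simps)
      next
        case False
        then show ?thesis using sz vW' NW' inC_sum1N[OF xsC] inC_sum1N[OF yC] by simp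
      qed
      show "(\<Sum>b\<in>Some -` W'. z (b,1)) = 1" if "None \<notin> W'"
        using sz vW' that inC_sum1N[OF xsC] inC_sum1N[OF yC] by simp
    qed
    have sub': "cellM A' W' \<subseteq> cellM A W" using cellM_mono A'A W'W by blast
    have yA: "y \<in> cellM A W" using yC sub' cellM_coord[OF fA' fW'] by blast
    have zA: "z \<in> cellM A W" using zC sub' cellM_coord[OF fA' fW'] by blast
    define u where "u = 1 / (1 + e)"
    have u: "0 < u" "u < 1" "u * (1 + e) = 1" using epos by (auto simp: u_def)
    have xs_eq: "xs = (1 - u) *\<^sub>R y + u *\<^sub>R z"
    proof
      fix p
      have "(1 - u) * y p + u * ((1 + e) * xs p - e * y p) = y p - (u * (1 + e)) * y p + (u * (1 + e)) * xs p"
        by (simp add: algebra_simps)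
      then show "xs p = ((1 - u) *\<^sub>R y + u *\<^sub>R z) p" using u(3) by (simp add: zp)
    qed
    have "y \<noteq> z"
    proof
      assume "y = z"
      then have "xs = y" using xs_eq by (simp add: scaleR_left_distrib[symmetric])
      then show False using False by simp
    qed
    then have "xs \<in> open_segment y z" using xs_eq u by (auto simp: in_segment)
    then show "y \<in> F" using F yA zA xsF unfolding face_of_def by blast
  qed
  have "F = cellM A' W'"
  proof
    show "F \<subseteq> cellM A' W'" using F_sub cellM_coord[OF fA' fW'] by blast
    show "cellM A' W' \<subseteq> F" using C_sub cellM_coord[OF fA' fW'] by blast
  qed
  then show ?thesis using A'A W'W by blast
qed



lemma aff_indep_card_le:
  fixes X S :: "'a::real_vector set"
  assumes X: "finite X" and S: "S \<subseteq> affine hull X" and ind: "\<not> affine_dependent S"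
  shows "finite S \<and> card S \<le> card X"
proof (cases "S = {}")
  case True then show ?thesis by simp
next
  case False
  then obtain b where b: "b \<in> S" by auto
  then have "X \<noteq> {}" using S by auto
  then obtain a where a: "a \<in> X" by auto
  define T where "T = (\<lambda>x. -a + x) ` (X - {a})"
  have hull: "affine hull X = (\<lambda>x. a + x) ` span T" using affine_hull_span2[OF a] by (simp add: T_def)
  have indep: "independent ((\<lambda>x. -b + x) ` (S - {b}))"
    using ind affine_dependent_iff_dependent2[OF b] by simp
  have inspan: "(\<lambda>x. -b + x) ` (S - {b}) \<subseteq> span T"
  proof
    fix y assume "y \<in> (\<lambda>x. -b + x) ` (S - {b})"
    then obtain s where s: "s \<in> S" "y = -b + s" by auto
    obtain u where u: "u \<in> span T" "s = a + u" using s(1) S hull by auto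
    obtain u' where u': "u' \<in> span T" "b = a + u'" using b S hull by auto
    have "y = u - u'" using s u u' by (simp add: algebra_simps)
    then show "y \<in> span T" using u u' span_diff by blast
  qed
  have fT: "finite T" using X by (simp add: T_def)
  have bound: "finite ((\<lambda>x. -b + x) ` (S - {b})) \<and> card ((\<lambda>x. -b + x) ` (S - {b})) \<le> card T"
    using independent_span_bound[OF fT indep inspan] .
  have inj: "inj_on (\<lambda>x. -b + x) (S - {b})" by (auto simp: inj_on_def)
  have fS: "finite (S - {b})" using bound inj finite_imageD by blast
  have cS: "card (S - {b}) \<le> card T" using bound card_image[OF inj] by simp
  have "card T \<le> card (X - {a})" unfolding T_def using card_image_le X by blast
  also have "\<dots> = card X - 1" using a X by simp
  finally have "card (S - {b}) \<le> card X - 1" using cS by simp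
  moreover have "card S = card (S - {b}) + 1" using fS b
    by (metis card_Diff_singleton_if card_gt_0_iff empty_iff finite_Diff2 finite.emptyI finite_insert add.commute Suc_diff_1 Suc_eq_plus1 insert_Diff)
  moreover have "card X \<ge> 1" using a X by (metis One_nat_def Suc_leI card_gt_0_iff empty_iff)
  ultimately show ?thesis using fS by simp
qed

lemma aff_indep_insert:
  fixes S :: "'a::real_vector set"
  assumes ind: "\<not> affine_dependent S" and p: "p \<notin> affine hull S"
  shows "\<not> affine_dependent (insert p S)"
proof (cases "S = {}")
  case True then show ?thesis by simp
next
  case False
  then obtain b where b: "b \<in> S" by auto
  have pS: "p \<notin> S" by (meson p hull_inc)
  have "insert p S - {b} = insert p (S - {b})" using pS b by auto
  then have e: "(\<lambda>x. -b + x) ` (insert p S - {b}) = insert (-b + p) ((\<lambda>x. -b + x) ` (S - {b}))" by simp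
  have indep: "independent ((\<lambda>x. -b + x) ` (S - {b}))"
    using ind affine_dependent_iff_dependent2[OF b] by simp
  have hull: "affine hull S = (\<lambda>x. b + x) ` span ((\<lambda>x. -b + x) ` (S - {b}))"
    using affine_hull_span2[OF b] by simp
  have nsp: "-b + p \<notin> span ((\<lambda>x. -b + x) ` (S - {b}))"
  proof
    assume "-b + p \<in> span ((\<lambda>x. -b + x) ` (S - {b}))"
    then have "b + (-b + p) \<in> affine hull S" using hull by blast
    then show False using p by simp
  qed
  have "independent (insert (-b + p) ((\<lambda>x. -b + x) ` (S - {b})))"
    using indep nsp by (simp add: independent_insertI)
  then show ?thesis
    using affine_dependent_iff_dependent2[of b "insert p S"] b e by simp
qed

lemma affine_rank_eq:
  fixes P S :: "'a::real_vector set"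
  assumes "S \<subseteq> P" "finite S" "\<not> affine_dependent S" "P \<subseteq> affine hull S"
  shows "affine_rank P = card S"
  unfolding affine_rank_def
proof (rule Greatest_equality)
  show "\<exists>S'. S' \<subseteq> P \<and> finite S' \<and> \<not> affine_dependent S' \<and> card S' = card S" using assms by blast
  fix n assume "\<exists>S'. S' \<subseteq> P \<and> finite S' \<and> \<not> affine_dependent S' \<and> card S' = n"
  then obtain S' where "S' \<subseteq> P" "\<not> affine_dependent S'" "card S' = n" by blast
  then show "n \<le> card S" using aff_indep_card_le[of S S'] assms by auto
qed

lemma basis_exists:
  fixes P X :: "'a::real_vector set"
  assumes X: "finite X" and P: "P \<subseteq> affine hull X"
  shows "\<exists>S. S \<subseteq> P \<and> finite S \<and> \<not> affine_dependent S \<and> P \<subseteq> affine hull S"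
proof -
  define K where "K = {n. \<exists>S. S \<subseteq> P \<and> finite S \<and> \<not> affine_dependent S \<and> card S = n}"
  have Kb: "n \<le> card X" if "n \<in> K" for n
    using that aff_indep_card_le[OF X] P by (auto simp: K_def)
  have fK: "finite K" using Kb by (meson finite_nat_set_iff_bounded_le)
  have "0 \<in> K" unfolding K_def by (auto intro!: exI[of _ "{}"])
  then have Kne: "K \<noteq> {}" by auto
  have "Max K \<in> K" using fK Kne by simp
  then obtain S where S: "S \<subseteq> P" "finite S" "\<not> affine_dependent S" "card S = Max K"
    by (auto simp: K_def)
  have "P \<subseteq> affine hull S"
  proof
    fix y assume y: "y \<in> P"
    show "y \<in> affine hull S"
    proof (rule ccontr)
      assume ny: "y \<notin> affine hull S"
      then have yS: "y \<notin> S" by (meson hull_inc)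
      have "card (insert y S) \<in> K"
        unfolding K_def using S y aff_indep_insert[OF S(3) ny] by blast
      then have "card (insert y S) \<le> Max K" using fK by simp
      then show False using S yS by simp
    qed
  qed
  then show ?thesis using S by blast
qed

lemma affine_rank_insert:
  fixes lo hi X :: "'a::real_vector set"
  assumes X: "finite X" and lo: "lo \<subseteq> affine hull X" and sub: "lo \<subseteq> hi"
    and p: "p \<in> hi" "p \<notin> affine hull lo" and hi: "hi \<subseteq> affine hull (insert p lo)"
  shows "cell_dim hi = cell_dim lo + 1"
proof -
  obtain S where S: "S \<subseteq> lo" "finite S" "\<not> affine_dependent S" "lo \<subseteq> affine hull S"
    using basis_exists[OF X lo] by blast
  have r1: "affine_rank lo = card S" by (rule affine_rank_eq) (use S in auto)
  have pS: "p \<notin> affine hull S" using p(2) hull_mono[OF S(1)] by blast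
  have pS': "p \<notin> S" by (meson pS hull_inc)
  have ind: "\<not> affine_dependent (insert p S)" using aff_indep_insert[OF S(3) pS] .
  have "insert p lo \<subseteq> affine hull (insert p S)"
    using S(4) hull_mono[of S "insert p S"] hull_inc[of p "insert p S"] by blast
  then have "affine hull (insert p lo) \<subseteq> affine hull (insert p S)"
    by (simp add: hull_minimal)
  then have "hi \<subseteq> affine hull (insert p S)" using hi by blast
  then have r2: "affine_rank hi = card (insert p S)"
    by (intro affine_rank_eq) (use S sub p(1) ind in auto)
  show ?thesis unfolding cell_dim_def using r1 r2 pS' S(2) by simp
qed



lemma affine_level:
  fixes g :: "('a::real_vector) \<Rightarrow> real"
  assumes "\<And>x y u v. g (u *\<^sub>R x + v *\<^sub>R y) = u * g x + v * g y"
  shows "affine {x. g x = c}"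
  unfolding affine_def using assms by (auto simp: algebra_simps simp flip: distrib_right)

lemma cellM_hull: "cellM A W = convex hull (unit_vec 0 ` A + vec1 ` W)"
  unfolding cellM_def std_simplex_def convex_hull_set_plus by simp

lemma cellM_dim_insert:
  fixes A :: "'v set" and W :: "'v option set"
  assumes fA: "finite A" and fW: "finite W" and Ane: "A \<noteq> {}" and Wne: "W \<noteq> {}" and w: "w \<notin> W"
  shows "cell_dim (cellM A (insert w W)) = cell_dim (cellM A W) + 1"
proof -
  define X where "X = unit_vec 0 ` A + vec1 ` W"
  have fX: "finite X" using fA fW by (simp add: X_def finite_set_plus)
  have lo: "cellM A W \<subseteq> affine hull X"
    unfolding cellM_hull X_def by (rule convex_hull_subset_affine_hull)
  have sub: "cellM A W \<subseteq> cellM A (insert w W)" by (rule cellM_mono) auto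
  obtain a0 where a0: "a0 \<in> A" using Ane by auto
  obtain w0 where w0: "w0 \<in> W" using Wne by auto
  define p where "p = unit_vec 0 a0 + vec1 w"
  have pin: "p \<in> cellM A (insert w W)" unfolding p_def by (rule vertex_in_cellM) (use a0 in auto)
  have fW': "finite (insert w W)" using fW by simp
  have pout: "p \<notin> affine hull (cellM A W)"
  proof (cases w)
    case None
    define g where "g x = (\<Sum>b\<in>Some -` W. x (b,1))" for x :: "'v \<times> nat \<Rightarrow> real"
    have aff: "affine {x. g x = 1}"
      by (rule affine_level) (simp add: g_def sum.distrib sum_distrib_left)
    have "cellM A W \<subseteq> {x. g x = 1}"
      using inC_sum1N w None by (auto simp: cellM_coord[OF fA fW] g_def)
    then have "affine hull (cellM A W) \<subseteq> {x. g x = 1}" using aff by (simp add: hull_minimal)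
    moreover have "g p = 0" using None by (simp add: g_def p_def vec1_def unit_vec_def)
    ultimately show ?thesis by auto
  next
    case (Some b)
    define g where "g x = x (b,1)" for x :: "'v \<times> nat \<Rightarrow> real"
    have aff: "affine {x. g x = 0}"
      by (rule affine_level) (simp add: g_def)
    have "cellM A W \<subseteq> {x. g x = 0}"
      using inC_supp1 w Some by (auto simp: cellM_coord[OF fA fW] g_def)
    then have "affine hull (cellM A W) \<subseteq> {x. g x = 0}" using aff by (simp add: hull_minimal)
    moreover have "g p = 1" using Some by (simp add: g_def p_def vec1_def unit_vec_def)
    ultimately show ?thesis by auto
  qed
  have hi: "cellM A (insert w W) \<subseteq> affine hull (insert p (cellM A W))"
  proof
    fix y assume "y \<in> cellM A (insert w W)"
    then obtain a c where y: "y = a + c" and a: "a \<in> convex hull (unit_vec 0 ` A)"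
      and c: "c \<in> convex hull (insert (vec1 w) (vec1 ` W))"
      by (auto simp: cellM_def std_simplex_def set_plus_def)
    obtain u v c' where uv: "0 \<le> u" "0 \<le> v" "u + v = 1" and c': "c' \<in> convex hull (vec1 ` W)"
      and ce: "c = u *\<^sub>R vec1 w + v *\<^sub>R c'"
      using c convex_hull_insert[of "vec1 ` W" "vec1 w"] Wne by auto
    let ?H = "affine hull (insert p (cellM A W))"
    have affH: "affine ?H" by simp
    have inH: "x \<in> ?H" if "x \<in> cellM A W" for x using that by (simp add: hull_inc)
    have ac': "a + c' \<in> ?H" using a c' inH by (auto simp: cellM_def std_simplex_def set_plus_def)
    have aw0: "a + vec1 w0 \<in> ?H"
      using a w0 inH by (auto simp: cellM_def std_simplex_def set_plus_def intro!: hull_inc)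
    have pw0: "unit_vec 0 a0 + vec1 w0 \<in> ?H" using inH vertex_in_cellM[OF a0 w0] by blast
    have pH: "p \<in> ?H" by (simp add: hull_inc)
    have "p + 1 *\<^sub>R ((a + vec1 w0) - (unit_vec 0 a0 + vec1 w0)) \<in> ?H"
      by (rule mem_affine_3_minus[OF affH pH aw0 pw0])
    then have aw: "a + vec1 w \<in> ?H" by (simp add: p_def algebra_simps)
    have "v *\<^sub>R (a + c') + u *\<^sub>R (a + vec1 w) \<in> ?H"
      by (rule mem_affine[OF affH ac' aw]) (use uv in simp)
    moreover have "v *\<^sub>R (a + c') + u *\<^sub>R (a + vec1 w) = y"
      using y ce uv by (simp add: algebra_simps flip: scaleR_add_left)
    ultimately show "y \<in> ?H" by simp
  qed
  show ?thesis by (rule affine_rank_insert[OF fX lo sub pin pout hi])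
qed



lemma collapse_polyhedral:
  assumes "elementary_collapse K L"
  shows "polyhedral_complex L"
proof -
  from assms obtain \<sigma> \<tau> where K: "polyhedral_complex K" and s: "\<sigma> \<in> K" "\<tau> \<in> K" "\<sigma> \<subset> \<tau>"
    and free: "\<forall>\<rho>\<in>K. \<sigma> \<subseteq> \<rho> \<longrightarrow> \<rho> = \<sigma> \<or> \<rho> = \<tau>" and L: "L = K - {\<sigma>, \<tau>}"
    unfolding elementary_collapse_def by blast
  have K1: "finite K" and K2: "\<forall>P\<in>K. polytope P \<and> P \<noteq> {}"
    and K3: "\<forall>P\<in>K. \<forall>F. F face_of P \<and> F \<noteq> {} \<longrightarrow> F \<in> K"
    and K4: "\<forall>P\<in>K. \<forall>Q\<in>K. P \<inter> Q = {} \<or> (P \<inter> Q face_of P \<and> P \<inter> Q face_of Q)"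
    using K unfolding polyhedral_complex_def by blast+
  show ?thesis
    unfolding polyhedral_complex_def
  proof (intro conjI ballI allI impI)
    show "finite L" using K1 L by simp
    fix P assume P: "P \<in> L"
    then have PK: "P \<in> K" "P \<noteq> \<sigma>" "P \<noteq> \<tau>" using L by auto
    show "polytope P" "P \<noteq> {}" using K2 PK by blast+
    {
      fix F assume F: "F face_of P \<and> F \<noteq> {}"
      then have FK: "F \<in> K" using K3 PK by blast
      have FP: "F \<subseteq> P" using F face_of_imp_subset by blast
      have "F \<noteq> \<sigma>" using free FP PK by blast
      moreover have "F \<noteq> \<tau>" using free FP PK s(3) by blast
      ultimately show "F \<in> L" using L FK by blast
    }
    fix Q assume "Q \<in> L"
    then have "Q \<in> K" using L by auto
    then show "P \<inter> Q = {} \<or> P \<inter> Q face_of P \<and> P \<inter> Q face_of Q"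
      using K4 PK by blast
  qed
qed

abbreviation collapses where "collapses \<equiv> (\<lambda>A B. elementary_collapse A B)\<^sup>*\<^sup>*"

lemma collapse_seq:
  fixes c :: "'k \<times> bool \<Rightarrow> 'a::real_vector set" and rk :: "'k \<Rightarrow> nat"
  assumes "finite R" "polyhedral_complex K" "K = L \<union> c ` (R \<times> UNIV)"
    "inj_on c (R \<times> UNIV)" "L \<inter> c ` (R \<times> UNIV) = {}"
    "\<forall>k\<in>R. c (k,False) \<subset> c (k,True) \<and> cell_dim (c (k,False)) = cell_dim (c (k,True)) - 1"
    "\<forall>k\<in>R. \<forall>\<rho>\<in>K. c (k,False) \<subseteq> \<rho> \<longrightarrow> \<rho> = c (k,False) \<or> \<rho> = c (k,True) \<or> (\<exists>k'\<in>R. \<exists>t. \<rho> = c (k',t) \<and> rk k < rk k')"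
  shows "collapses K L"
  using assms
proof (induction "card R" arbitrary: R K rule: less_induct)
  case less
  show ?case
  proof (cases "R = {}")
    case True
    then show ?thesis using less.prems by simp
  next
    case False
    obtain k where k: "k \<in> R" "\<forall>k'\<in>R. rk k' \<le> rk k"
    proof -
      have "Max (rk ` R) \<in> rk ` R" using False less.prems(1) by simp
      then obtain k where "k \<in> R" "rk k = Max (rk ` R)" by auto
      moreover have "\<forall>k'\<in>R. rk k' \<le> Max (rk ` R)" using less.prems(1) by simp
      ultimately show ?thesis using that by auto
    qed
    define K' where "K' = K - {c (k,False), c (k,True)}"
    have inK: "c (k,t) \<in> K" for t using less.prems(3) k by auto
    have c1: "c (k,False) \<subset> c (k,True)" "cell_dim (c (k,False)) = cell_dim (c (k,True)) - 1"
      using less.prems(6) k by auto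
    have c2: "\<forall>\<rho>\<in>K. c (k,False) \<subseteq> \<rho> \<longrightarrow> \<rho> = c (k,False) \<or> \<rho> = c (k,True)"
    proof (intro ballI impI)
      fix \<rho> assume r: "\<rho> \<in> K" "c (k,False) \<subseteq> \<rho>"
      have "\<rho> = c (k,False) \<or> \<rho> = c (k,True) \<or> (\<exists>k'\<in>R. \<exists>t. \<rho> = c (k',t) \<and> rk k < rk k')"
        using less.prems(7) k(1) r by blast
      moreover have "\<not> (\<exists>k'\<in>R. \<exists>t. \<rho> = c (k',t) \<and> rk k < rk k')" using k(2) by (meson not_less)
      ultimately show "\<rho> = c (k,False) \<or> \<rho> = c (k,True)" by blast
    qed
    have col: "elementary_collapse K K'"
      unfolding elementary_collapse_def
      using less.prems(2) inK[of False] inK[of True] c1 c2 K'_def by blast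
    have cK': "K' = L \<union> c ` ((R - {k}) \<times> UNIV)"
    proof -
      have "R \<times> UNIV = (R - {k}) \<times> UNIV \<union> {(k,False), (k,True)}" using k by auto
      then have e: "c ` (R \<times> UNIV) = c ` ((R - {k}) \<times> UNIV) \<union> {c (k,False), c (k,True)}" by auto
      have d: "c ` ((R - {k}) \<times> UNIV) \<inter> {c (k,False), c (k,True)} = {}"
      proof -
        have "c (k', t') \<noteq> c (k, t)" if "k' \<in> R - {k}" for k' t' t
          using inj_onD[OF less.prems(4), of "(k',t')" "(k,t)"] that k by auto
        then show ?thesis by auto
      qed
      have LT: "L \<inter> {c (k,False), c (k,True)} = {}" using less.prems(5) k(1) by blast
      have "K' = (L \<union> c ` ((R - {k}) \<times> UNIV) \<union> {c (k,False), c (k,True)}) - {c (k,False), c (k,True)}"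
        unfolding K'_def less.prems(3) e by (simp add: Un_assoc)
      also have "\<dots> = L \<union> c ` ((R - {k}) \<times> UNIV)"
        using LT d by (simp add: Un_Diff Diff_triv)
      finally show ?thesis .
    qed
    have "collapses K' L"
    proof (rule less.hyps[of "R - {k}"])
      show "card (R - {k}) < card R" using card_Diff1_less[OF less.prems(1) k(1)] .
      show "finite (R - {k})" using less.prems(1) by simp
      show "polyhedral_complex K'" using collapse_polyhedral[OF col] .
      show "K' = L \<union> c ` ((R - {k}) \<times> UNIV)" by (rule cK')
      show "inj_on c ((R - {k}) \<times> UNIV)" using less.prems(4) by (rule inj_on_subset) auto
      show "L \<inter> c ` ((R - {k}) \<times> UNIV) = {}" using less.prems(5) by auto
      show "\<forall>k'\<in>R - {k}. c (k',False) \<subset> c (k',True) \<and> cell_dim (c (k',False)) = cell_dim (c (k',True)) - 1"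
        using less.prems(6) by auto
      show "\<forall>k1\<in>R - {k}. \<forall>\<rho>\<in>K'. c (k1,False) \<subseteq> \<rho> \<longrightarrow> \<rho> = c (k1,False) \<or> \<rho> = c (k1,True) \<or>
              (\<exists>k'\<in>R - {k}. \<exists>t. \<rho> = c (k',t) \<and> rk k1 < rk k')"
      proof (intro ballI impI)
        fix k1 \<rho> assume k1: "k1 \<in> R - {k}" and \<rho>: "\<rho> \<in> K'" and sub: "c (k1,False) \<subseteq> \<rho>"
        have "\<rho> \<in> K" using \<rho> K'_def by auto
        then have "\<rho> = c (k1,False) \<or> \<rho> = c (k1,True) \<or> (\<exists>k'\<in>R. \<exists>t. \<rho> = c (k',t) \<and> rk k1 < rk k')"
          using less.prems(7) k1 sub by auto
        moreover have "\<rho> \<noteq> c (k,t)" for t using \<rho> K'_def by (cases t) auto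
        ultimately show "\<rho> = c (k1,False) \<or> \<rho> = c (k1,True) \<or> (\<exists>k'\<in>R - {k}. \<exists>t. \<rho> = c (k',t) \<and> rk k1 < rk k')"
          by blast
      qed
    qed
    then show ?thesis using col by (simp add: converse_rtranclp_into_rtranclp)
  qed
qed



definition Mc :: "'v set \<Rightarrow> ('v \<times> 'v) set \<Rightarrow> ('v set \<times> 'v option set) set" where
  "Mc V E = {(A,W). A \<noteq> {} \<and> A \<subseteq> V \<and> W \<noteq> {} \<and> W \<subseteq> insert None (Some ` V) \<and>
     (\<forall>a\<in>A. \<forall>b. Some b \<in> W \<longrightarrow> (a,b) \<in> E) \<and> common_nbrs E A \<noteq> {}}"

definition Mg :: "'v set \<Rightarrow> ('v \<times> 'v) set \<Rightarrow> ('v \<times> nat \<Rightarrow> real) set set" where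
  "Mg V E = (\<lambda>(A,W). cellM A W) ` Mc V E"

lemma Mc_fin:
  assumes "finite V" "(A,W) \<in> Mc V E"
  shows "finite A" "finite W"
  using assms by (auto simp: Mc_def intro: finite_subset)

lemma Mc_finite: "finite V \<Longrightarrow> finite (Mc V E)"
  by (rule finite_subset[of _ "Pow V \<times> Pow (insert None (Some ` V))"]) (auto simp: Mc_def)

lemma cellM_inj:
  assumes "finite A" "finite W" "finite A'" "finite W'" "A \<noteq> {}" "W \<noteq> {}" "A' \<noteq> {}" "W' \<noteq> {}"
    and "cellM A W = cellM A' W'"
  shows "A = A' \<and> W = W'"
  using cellM_subset_iff[of A' W' A W] cellM_subset_iff[of A W A' W'] assms by auto

lemma common_nbrs_anti: "A' \<subseteq> A \<Longrightarrow> common_nbrs E A \<subseteq> common_nbrs E A'"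
  by (auto simp: common_nbrs_def)

lemma Mc_sub:
  assumes "(A,W) \<in> Mc V E" "A' \<subseteq> A" "W' \<subseteq> W" "A' \<noteq> {}" "W' \<noteq> {}"
  shows "(A',W') \<in> Mc V E"
  using assms common_nbrs_anti[OF assms(2), of E] unfolding Mc_def by blast

lemma Mg_polyhedral:
  assumes V: "finite V"
  shows "polyhedral_complex (Mg V E)"
  unfolding polyhedral_complex_def
proof (intro conjI ballI allI impI)
  show "finite (Mg V E)" using Mc_finite[OF V] by (simp add: Mg_def)
  fix P assume "P \<in> Mg V E"
  then obtain A W where AW: "(A,W) \<in> Mc V E" and P: "P = cellM A W" by (auto simp: Mg_def)
  have fA: "finite A" and fW: "finite W" using Mc_fin[OF V AW] by auto
  have ne: "A \<noteq> {}" "W \<noteq> {}" using AW by (auto simp: Mc_def)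
  show "polytope P" using cellM_polytope[OF fA fW] P by simp
  show "P \<noteq> {}" unfolding P using cellM_nonempty[of A W] ne by blast
  {
    fix F assume F: "F face_of P \<and> F \<noteq> {}"
    then obtain A' W' where s: "A' \<subseteq> A" "W' \<subseteq> W" "F = cellM A' W'"
      using face_is_cellM[OF fA fW] P by blast
    then have "A' \<noteq> {}" "W' \<noteq> {}" using F cellM_nonempty[of A' W'] by auto
    then have "(A',W') \<in> Mc V E" using Mc_sub[OF AW s(1,2)] by blast
    then show "F \<in> Mg V E" using s(3) by (force simp: Mg_def)
  }
  fix Q assume "Q \<in> Mg V E"
  then obtain A2 W2 where AW2: "(A2,W2) \<in> Mc V E" and Q: "Q = cellM A2 W2" by (auto simp: Mg_def)
  have fA2: "finite A2" and fW2: "finite W2" using Mc_fin[OF V AW2] by auto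
  have I: "P \<inter> Q = cellM (A \<inter> A2) (W \<inter> W2)" using cellM_Int[OF fA fA2 fW fW2] P Q by simp
  have "cellM (A \<inter> A2) (W \<inter> W2) face_of cellM A W" by (rule cellM_face_of[OF fA fW]) auto
  moreover have "cellM (A \<inter> A2) (W \<inter> W2) face_of cellM A2 W2" by (rule cellM_face_of[OF fA2 fW2]) auto
  ultimately have "P \<inter> Q face_of P" "P \<inter> Q face_of Q" using I P Q by simp_all
  then show "P \<inter> Q = {} \<or> P \<inter> Q face_of P \<and> P \<inter> Q face_of Q" by blast
qed



lemma cellM_inj_on: "finite V \<Longrightarrow> inj_on (\<lambda>(A,W). cellM A W) (Mc V E)"
proof (rule inj_onI, clarify)
  fix A W A' W' assume V: "finite V" and p: "(A,W) \<in> Mc V E" "(A',W') \<in> Mc V E"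
    and e: "cellM A W = cellM A' W'"
  show "A = A' \<and> W = W'"
    by (rule cellM_inj[OF Mc_fin[OF V p(1)] Mc_fin[OF V p(2)] _ _ _ _ e]) (use p in \<open>auto simp: Mc_def\<close>)
qed

lemma collapse_param:
  fixes par :: "'k \<times> bool \<Rightarrow> 'v set \<times> 'v option set" and rk :: "'k \<Rightarrow> nat"
  assumes V: "finite V" and R: "finite R"
    and M: "Mc V E = Lc \<union> par ` (R \<times> UNIV)"
    and inj: "inj_on par (R \<times> UNIV)" and disj: "Lc \<inter> par ` (R \<times> UNIV) = {}"
    and pair: "\<forall>k\<in>R. fst (par (k,True)) = fst (par (k,False)) \<and>
        snd (par (k,True)) = insert (w k) (snd (par (k,False))) \<and> w k \<notin> snd (par (k,False))"
    and rank: "\<forall>k\<in>R. \<forall>p\<in>Mc V E. fst (par (k,False)) \<subseteq> fst p \<and> snd (par (k,False)) \<subseteq> snd p \<longrightarrow>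
        p = par (k,False) \<or> p = par (k,True) \<or> (\<exists>k'\<in>R. \<exists>t. p = par (k',t) \<and> rk k < rk k')"
  shows "collapses (Mg V E) ((\<lambda>(A,W). cellM A W) ` Lc)"
proof -
  let ?cm = "(\<lambda>(A,W). cellM A W) :: 'v set \<times> 'v option set \<Rightarrow> _"
  define c where "c = ?cm \<circ> par"
  have injM: "inj_on ?cm (Mc V E)" by (rule cellM_inj_on[OF V])
  have parM: "par ` (R \<times> UNIV) \<subseteq> Mc V E" and LM: "Lc \<subseteq> Mc V E" using M by auto
  have parM': "par (k,t) \<in> Mc V E" if "k \<in> R" for k t using parM that by auto
  show ?thesis
  proof (rule collapse_seq[where c = c and rk = rk and R = R])
    show "finite R" by (rule R)
    show "polyhedral_complex (Mg V E)" by (rule Mg_polyhedral[OF V])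
    show "Mg V E = ?cm ` Lc \<union> c ` (R \<times> UNIV)"
      unfolding Mg_def M c_def by (simp add: image_Un image_comp)
    show "inj_on c (R \<times> UNIV)"
      unfolding c_def by (rule comp_inj_on[OF inj]) (rule inj_on_subset[OF injM parM])
    have "?cm ` Lc \<inter> ?cm ` (par ` (R \<times> UNIV)) = ?cm ` (Lc \<inter> par ` (R \<times> UNIV))"
      by (rule inj_on_image_Int[OF injM LM parM, symmetric])
    then show "?cm ` Lc \<inter> c ` (R \<times> UNIV) = {}" using disj by (simp add: c_def image_comp)
    show "\<forall>k\<in>R. c (k,False) \<subset> c (k,True) \<and> cell_dim (c (k,False)) = cell_dim (c (k,True)) - 1"
    proof
      fix k assume k: "k \<in> R"
      obtain A W where pF: "par (k,False) = (A,W)" by fastforce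
      have pT: "par (k,True) = (A, insert (w k) W)" and wk: "w k \<notin> W" using pair k pF by (metis fst_conv snd_conv prod.collapse)+
      have m1: "(A,W) \<in> Mc V E" using parM'[OF k, of False] pF by simp
      have m2: "(A, insert (w k) W) \<in> Mc V E" using parM'[OF k, of True] pT by simp
      have fin: "finite A" "finite W" using Mc_fin[OF V m1] by auto
      have ne: "A \<noteq> {}" "W \<noteq> {}" using m1 by (auto simp: Mc_def)
      have "cellM A W \<subseteq> cellM A (insert (w k) W)" by (rule cellM_mono) auto
      moreover have "cellM A W \<noteq> cellM A (insert (w k) W)"
        using cellM_inj[of A W A "insert (w k) W"] fin ne wk by auto
      moreover have "cell_dim (cellM A (insert (w k) W)) = cell_dim (cellM A W) + 1"
        by (rule cellM_dim_insert[OF fin ne wk])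
      ultimately show "c (k,False) \<subset> c (k,True) \<and> cell_dim (c (k,False)) = cell_dim (c (k,True)) - 1"
        by (simp add: c_def pF pT)
    qed
    show "\<forall>k\<in>R. \<forall>\<rho>\<in>Mg V E. c (k,False) \<subseteq> \<rho> \<longrightarrow> \<rho> = c (k,False) \<or> \<rho> = c (k,True) \<or> (\<exists>k'\<in>R. \<exists>t. \<rho> = c (k',t) \<and> rk k < rk k')"
    proof (intro ballI impI)
      fix k \<rho> assume k: "k \<in> R" and \<rho>: "\<rho> \<in> Mg V E" and sub: "c (k,False) \<subseteq> \<rho>"
      obtain A W where pF: "par (k,False) = (A,W)" by fastforce
      obtain A' W' where p': "(A',W') \<in> Mc V E" "\<rho> = cellM A' W'" using \<rho> by (auto simp: Mg_def)
      have m1: "(A,W) \<in> Mc V E" using parM'[OF k, of False] pF by simp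
      have ne: "A \<noteq> {}" "W \<noteq> {}" using m1 by (auto simp: Mc_def)
      have "A \<subseteq> A' \<and> W \<subseteq> W'"
        using cellM_subset_iff[OF Mc_fin[OF V p'(1)] ne] sub p'(2) pF by (simp add: c_def)
      then have "(A',W') = par (k,False) \<or> (A',W') = par (k,True) \<or> (\<exists>k'\<in>R. \<exists>t. (A',W') = par (k',t) \<and> rk k < rk k')"
        using rank k p'(1) pF by fastforce
      then show "\<rho> = c (k,False) \<or> \<rho> = c (k,True) \<or> (\<exists>k'\<in>R. \<exists>t. \<rho> = c (k',t) \<and> rk k < rk k')"
        using p'(2) by (auto simp: c_def) (metis case_prod_conv)+
    qed
  qed
qed



lemma std_simplex_cellM: "std_simplex 0 A = cellM A {None}"
  by (auto simp: cellM_def vec1_def set_plus_def)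

lemma hom_cell_cellM:
  "{a + b | a b. a \<in> std_simplex 0 \<sigma> \<and> b \<in> std_simplex 1 \<tau>} = cellM \<sigma> (Some ` \<tau>)"
proof -
  have "vec1 ` Some ` \<tau> = unit_vec 1 ` \<tau>" by (auto simp: vec1_def image_image)
  then show ?thesis by (auto simp: cellM_def std_simplex_def set_plus_def)
qed

lemma option_set_decomp: "W = Some ` (Some -` W) \<union> (if None \<in> W then {None} else {})"
  by (auto simp: image_iff) (metis option.exhaust)

lemma option_set_decomp': "W = (if None \<in> W then insert None (Some ` (Some -` W)) else Some ` (Some -` W))"
  using option_set_decomp[of W] by (cases "None \<in> W") auto

lemma collapse_to_N:
  fixes V :: "'v set" and E :: "('v \<times> 'v) set"
  assumes V: "finite V"
  shows "collapses (Mg V E) (nbhd_complex_geom V E)"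
proof -
  define R where "R = {(A,B). A \<noteq> {} \<and> A \<subseteq> V \<and> B \<noteq> {} \<and> B \<subseteq> V \<and> (\<forall>a\<in>A. \<forall>b\<in>B. (a,b) \<in> E)}"
  define par :: "('v set \<times> 'v set) \<times> bool \<Rightarrow> 'v set \<times> 'v option set"
    where "par = (\<lambda>((A,B),t). (A, if t then insert None (Some ` B) else Some ` B))"
  define Lc where "Lc = (\<lambda>A. (A, {None :: 'v option})) ` nbhd_complex V E"
  define rk :: "'v set \<times> 'v set \<Rightarrow> nat" where "rk = (\<lambda>(A,B). card A + card B)"
  have fR: "finite R" by (rule finite_subset[of _ "Pow V \<times> Pow V"]) (use V in \<open>auto simp: R_def\<close>)
  have L: "nbhd_complex_geom V E = (\<lambda>(A,W). cellM A W) ` Lc"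
    by (auto simp: nbhd_complex_geom_def Lc_def std_simplex_cellM image_image)
  have M: "Mc V E = Lc \<union> par ` (R \<times> UNIV)"
  proof
    show "Mc V E \<subseteq> Lc \<union> par ` (R \<times> UNIV)"
    proof
      fix p assume p: "p \<in> Mc V E"
      obtain A W where pe: "p = (A,W)" by fastforce
      define B where "B = Some -` W"
      have h: "A \<noteq> {}" "A \<subseteq> V" "W \<noteq> {}" "W \<subseteq> insert None (Some ` V)"
        "\<forall>a\<in>A. \<forall>b. Some b \<in> W \<longrightarrow> (a,b) \<in> E" "common_nbrs E A \<noteq> {}"
        using p pe by (auto simp: Mc_def)
      have Wd: "W = (if None \<in> W then insert None (Some ` B) else Some ` B)"
        unfolding B_def by (rule option_set_decomp')
      show "p \<in> Lc \<union> par ` (R \<times> UNIV)"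
      proof (cases "B = {}")
        case True
        then have "W = {None}" using Wd h(3) by (auto split: if_splits)
        moreover have "A \<in> nbhd_complex V E" using h by (simp add: nbhd_complex_def)
        ultimately show ?thesis using pe by (auto simp: Lc_def)
      next
        case False
        have "B \<subseteq> V" using h(4) by (auto simp: B_def)
        then have "(A,B) \<in> R" using h False by (auto simp: R_def B_def)
        moreover have "p = par ((A,B), None \<in> W)" using pe Wd by (simp add: par_def)
        ultimately show ?thesis by auto
      qed
    qed
    show "Lc \<union> par ` (R \<times> UNIV) \<subseteq> Mc V E"
    proof
      fix p assume "p \<in> Lc \<union> par ` (R \<times> UNIV)"
      then consider (L) A where "A \<in> nbhd_complex V E" "p = (A,{None})"
        | (P) A B t where "(A,B) \<in> R" "p = par ((A,B),t)" by (auto simp: Lc_def)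
      then show "p \<in> Mc V E"
      proof cases
        case L then show ?thesis by (auto simp: Mc_def nbhd_complex_def)
      next
        case P
        have "B \<subseteq> common_nbrs E A" using P(1) by (auto simp: R_def common_nbrs_def)
        then have "common_nbrs E A \<noteq> {}" using P(1) by (auto simp: R_def)
        then show ?thesis using P by (auto simp: Mc_def R_def par_def)
      qed
    qed
  qed
  have inj: "inj_on par (R \<times> UNIV)"
  proof (rule inj_onI)
    fix x y assume x: "x \<in> R \<times> UNIV" and y: "y \<in> R \<times> UNIV" and e: "par x = par y"
    obtain A B t where xe: "x = ((A,B),t)" by (metis prod.collapse)
    obtain A' B' t' where ye: "y = ((A',B'),t')" by (metis prod.collapse)
    have ne: "B \<noteq> {}" "B' \<noteq> {}" using x y xe ye by (auto simp: R_def)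
    have "A = A'" using e xe ye by (simp add: par_def)
    moreover have "t = t'" using e xe ye ne by (cases t; cases t'; auto simp: par_def)
    moreover have "B = B'"
    proof -
      have "Some ` B = Some ` B'" using e xe ye \<open>t = t'\<close> by (cases t) (auto simp: par_def)
      then show ?thesis by (simp add: inj_image_eq_iff)
    qed
    ultimately show "x = y" using xe ye by simp
  qed
  have disj: "Lc \<inter> par ` (R \<times> UNIV) = {}"
  proof -
    have "(A, {None}) \<noteq> par ((A',B),t)" if kR: "(A',B) \<in> R" for A A' B t
    proof -
      obtain b where "b \<in> B" using kR unfolding R_def by blast
      then show ?thesis by (auto simp: par_def)
    qed
    then show ?thesis by (auto simp: Lc_def)
  qed
  have pair: "\<forall>k\<in>R. fst (par (k,True)) = fst (par (k,False)) \<and>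
        snd (par (k,True)) = insert None (snd (par (k,False))) \<and> None \<notin> snd (par (k,False))"
    by (auto simp: par_def)
  have rank: "\<forall>k\<in>R. \<forall>p\<in>Mc V E. fst (par (k,False)) \<subseteq> fst p \<and> snd (par (k,False)) \<subseteq> snd p \<longrightarrow>
        p = par (k,False) \<or> p = par (k,True) \<or> (\<exists>k'\<in>R. \<exists>t. p = par (k',t) \<and> rk k < rk k')"
  proof (intro ballI impI)
    fix k p assume k: "k \<in> R" and p: "p \<in> Mc V E" and sub: "fst (par (k,False)) \<subseteq> fst p \<and> snd (par (k,False)) \<subseteq> snd p"
    obtain A B where ke: "k = (A,B)" by fastforce
    obtain A' W' where pe: "p = (A',W')" by fastforce
    define B' where "B' = Some -` W'"
    have kR: "A \<noteq> {}" "A \<subseteq> V" "B \<noteq> {}" "B \<subseteq> V" using k ke by (auto simp: R_def)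
    have AA': "A \<subseteq> A'" using sub ke pe by (simp add: par_def)
    have BB': "B \<subseteq> B'" using sub ke pe by (auto simp: par_def B'_def)
    have "p \<in> Lc \<union> par ` (R \<times> UNIV)" using M p by simp
    moreover have "p \<notin> Lc"
    proof
      assume "p \<in> Lc"
      then have "W' = {None}" using pe by (auto simp: Lc_def)
      then show False using BB' kR(3) by (auto simp: B'_def)
    qed
    ultimately obtain k' t where k': "k' \<in> R" "p = par (k',t)" by auto
    obtain A2 B2 where k'e: "k' = (A2,B2)" by fastforce
    have A2: "A2 = A'" and B2: "B2 = B'" using k' k'e pe by (auto simp: par_def B'_def split: if_splits)
    have fin: "finite A'" "finite B'" using k' k'e A2 B2 V by (auto simp: R_def intro: finite_subset)
    show "p = par (k,False) \<or> p = par (k,True) \<or> (\<exists>k'\<in>R. \<exists>t. p = par (k',t) \<and> rk k < rk k')"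
    proof (cases "A' = A \<and> B' = B")
      case True
      then have "k' = k" using ke k'e A2 B2 by simp
      then show ?thesis using k' by (cases t) auto
    next
      case False
      have c1: "card A \<le> card A'" "card B \<le> card B'" using AA' BB' fin card_mono by auto
      have "card A < card A' \<or> card B < card B'"
      proof (cases "A' = A")
        case True
        then have "B \<subset> B'" using False BB' by auto
        then show ?thesis using psubset_card_mono[OF fin(2)] by blast
      next
        case False
        then have "A \<subset> A'" using AA' by auto
        then show ?thesis using psubset_card_mono[OF fin(1)] by blast
      qed
      then have "card A + card B < card A' + card B'" using c1 by linarith
      then have "rk k < rk k'" using ke k'e A2 B2 by (simp add: rk_def)
      then show ?thesis using k' by blast
    qed
  qed
  show ?thesis
    unfolding L by (rule collapse_param[OF V fR M inj disj pair rank])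
qed



lemma common_nbrs_sub: "E \<subseteq> V \<times> V \<Longrightarrow> A \<noteq> {} \<Longrightarrow> common_nbrs E A \<subseteq> V"
  by (auto simp: common_nbrs_def)

lemma collapse_to_Hom:
  fixes V :: "'v set" and E :: "('v \<times> 'v) set"
  assumes V: "finite V" and EV: "E \<subseteq> V \<times> V"
  shows "collapses (Mg V E) (hom_K2_geom V E)"
proof -
  define m where "m A = (SOME y. y \<in> common_nbrs E A)" for A
  have mA: "m A \<in> common_nbrs E A" if "common_nbrs E A \<noteq> {}" for A
    unfolding m_def using that by (auto intro: someI_ex)
  define R where "R = {(A,B). A \<noteq> {} \<and> A \<subseteq> V \<and> common_nbrs E A \<noteq> {} \<and> B \<subseteq> common_nbrs E A - {m A}}"
  define par :: "('v set \<times> 'v set) \<times> bool \<Rightarrow> 'v set \<times> 'v option set"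
    where "par = (\<lambda>((A,B),t). (A, insert None (Some ` (if t then insert (m A) B else B))))"
  define Lc where "Lc = (\<lambda>(\<sigma>,\<tau>). (\<sigma>, Some ` \<tau>)) ` hom_K2_cells V E"
  define rk :: "'v set \<times> 'v set \<Rightarrow> nat" where "rk = (\<lambda>(A,B). card A * (card V + 1) + card B)"
  have Rsub: "B \<subseteq> V" "A \<subseteq> V" if "(A,B) \<in> R" for A B
    using that common_nbrs_sub[OF EV] by (auto simp: R_def)
  have "R \<subseteq> Pow V \<times> Pow V" using Rsub by fastforce
  then have fR: "finite R" using V finite_subset by blast
  have L: "hom_K2_geom V E = (\<lambda>(A,W). cellM A W) ` Lc"
    unfolding hom_K2_geom_def hom_cell_cellM Lc_def image_image by (simp add: case_prod_beta)
  have M: "Mc V E = Lc \<union> par ` (R \<times> UNIV)"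
  proof
    show "Mc V E \<subseteq> Lc \<union> par ` (R \<times> UNIV)"
    proof
      fix p assume p: "p \<in> Mc V E"
      obtain A W where pe: "p = (A,W)" by fastforce
      define B where "B = Some -` W"
      have h: "A \<noteq> {}" "A \<subseteq> V" "W \<noteq> {}" "W \<subseteq> insert None (Some ` V)"
        "\<forall>a\<in>A. \<forall>b. Some b \<in> W \<longrightarrow> (a,b) \<in> E" "common_nbrs E A \<noteq> {}"
        using p pe by (auto simp: Mc_def)
      have Wd: "W = (if None \<in> W then insert None (Some ` B) else Some ` B)"
        unfolding B_def by (rule option_set_decomp')
      have BV: "B \<subseteq> V" using h(4) by (auto simp: B_def)
      have Bc: "B \<subseteq> common_nbrs E A" using h(5) by (auto simp: B_def common_nbrs_def)
      show "p \<in> Lc \<union> par ` (R \<times> UNIV)"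
      proof (cases "None \<in> W")
        case False
        then have W: "W = Some ` B" using Wd by simp
        then have "B \<noteq> {}" using h(3) by auto
        then have "(A,B) \<in> hom_K2_cells V E" using h BV W by (auto simp: hom_K2_cells_def)
        then show ?thesis using pe W by (auto simp: Lc_def)
      next
        case True
        then have W: "W = insert None (Some ` B)" using Wd by simp
        show ?thesis
        proof (cases "m A \<in> B")
          case True
          have "(A, B - {m A}) \<in> R" using h Bc by (auto simp: R_def)
          moreover have "p = par ((A, B - {m A}), True)" using pe W True by (auto simp: par_def insert_absorb)
          ultimately show ?thesis by auto
        next
          case False
          have "(A, B) \<in> R" using h Bc False by (auto simp: R_def)
          moreover have "p = par ((A, B), False)" using pe W by (simp add: par_def)
          ultimately show ?thesis by auto
        qed
      qed
    qed
    show "Lc \<union> par ` (R \<times> UNIV) \<subseteq> Mc V E"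
    proof
      fix p assume "p \<in> Lc \<union> par ` (R \<times> UNIV)"
      then consider (L) \<sigma> \<tau> where "(\<sigma>,\<tau>) \<in> hom_K2_cells V E" "p = (\<sigma>, Some ` \<tau>)"
        | (P) A B t where "(A,B) \<in> R" "p = par ((A,B),t)" by (auto simp: Lc_def)
      then show "p \<in> Mc V E"
      proof cases
        case L
        have "\<tau> \<subseteq> common_nbrs E \<sigma>" using L(1) by (auto simp: hom_K2_cells_def common_nbrs_def)
        then have "common_nbrs E \<sigma> \<noteq> {}" using L(1) by (auto simp: hom_K2_cells_def)
        then show ?thesis using L by (auto simp: Mc_def hom_K2_cells_def)
      next
        case P
        have c: "common_nbrs E A \<noteq> {}" "A \<noteq> {}" "A \<subseteq> V" "B \<subseteq> common_nbrs E A" using P(1) by (auto simp: R_def)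
        have X: "(if t then insert (m A) B else B) \<subseteq> common_nbrs E A" using c mA by auto
        then have XV: "(if t then insert (m A) B else B) \<subseteq> V" using common_nbrs_sub[OF EV c(2)] by blast
        have "\<forall>a\<in>A. \<forall>b. Some b \<in> insert None (Some ` (if t then insert (m A) B else B)) \<longrightarrow> (a,b) \<in> E"
          using X by (auto simp: common_nbrs_def)
        then show ?thesis using P c XV by (auto simp: Mc_def par_def)
      qed
    qed
  qed
  have inj: "inj_on par (R \<times> UNIV)"
  proof (rule inj_onI)
    fix x y assume x: "x \<in> R \<times> UNIV" and y: "y \<in> R \<times> UNIV" and e: "par x = par y"
    obtain A B t where xe: "x = ((A,B),t)" by (metis prod.collapse)
    obtain A' B' t' where ye: "y = ((A',B'),t')" by (metis prod.collapse)
    have nm: "m A \<notin> B" "m A' \<notin> B'" using x y xe ye by (auto simp: R_def)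
    have AA: "A = A'" using e xe ye by (simp add: par_def)
    have vs: "Some -` insert None (Some ` Z) = Z" for Z :: "'v set" by auto
    have "snd (par ((A,B),t)) = snd (par ((A,B'),t'))" using e xe ye AA by simp
    then have "Some -` snd (par ((A,B),t)) = Some -` snd (par ((A,B'),t'))" by simp
    then have X: "(if t then insert (m A) B else B) = (if t' then insert (m A) B' else B')"
      unfolding par_def prod.case snd_conv vs .
    have "t = t'" using X nm AA by (cases t; cases t'; auto)
    moreover have "B = B'"
    proof (cases t)
      case True
      then have "insert (m A) B = insert (m A) B'" using X \<open>t = t'\<close> by simp
      then have "insert (m A) B - {m A} = insert (m A) B' - {m A}" by simp
      then show ?thesis using nm AA by simp
    next
      case False then show ?thesis using X \<open>t = t'\<close> by simp
    qed
    ultimately show "x = y" using xe ye AA by simp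
  qed
  have disj: "Lc \<inter> par ` (R \<times> UNIV) = {}" by (auto simp: Lc_def par_def)
  have pair: "\<forall>k\<in>R. fst (par (k,True)) = fst (par (k,False)) \<and>
        snd (par (k,True)) = insert (Some (m (fst k))) (snd (par (k,False))) \<and> Some (m (fst k)) \<notin> snd (par (k,False))"
    by (auto simp: par_def R_def)
  have rank: "\<forall>k\<in>R. \<forall>p\<in>Mc V E. fst (par (k,False)) \<subseteq> fst p \<and> snd (par (k,False)) \<subseteq> snd p \<longrightarrow>
        p = par (k,False) \<or> p = par (k,True) \<or> (\<exists>k'\<in>R. \<exists>t. p = par (k',t) \<and> rk k < rk k')"
  proof (intro ballI impI)
    fix k p assume k: "k \<in> R" and p: "p \<in> Mc V E" and sub: "fst (par (k,False)) \<subseteq> fst p \<and> snd (par (k,False)) \<subseteq> snd p"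
    obtain A B where ke: "k = (A,B)" by fastforce
    obtain A' W' where pe: "p = (A',W')" by fastforce
    have kR0: "(A,B) \<in> R" using k ke by simp
    have kR: "A \<noteq> {}" "A \<subseteq> V" "B \<subseteq> V" "m A \<notin> B"
      using kR0 Rsub[OF kR0] unfolding R_def by blast+
    have AA': "A \<subseteq> A'" using sub ke pe by (simp add: par_def)
    have BW: "insert None (Some ` B) \<subseteq> W'" using sub ke pe by (simp add: par_def)
    have "p \<in> Lc \<union> par ` (R \<times> UNIV)" using M p by simp
    moreover have "p \<notin> Lc" using BW pe by (auto simp: Lc_def)
    ultimately obtain k' t where k': "k' \<in> R" "p = par (k',t)" by auto
    obtain A2 B2 where k'e: "k' = (A2,B2)" by fastforce
    have A2: "A2 = A'" using k' k'e pe by (simp add: par_def)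
    have W': "W' = insert None (Some ` (if t then insert (m A') B2 else B2))" using k' k'e pe A2 by (simp add: par_def)
    have k'R0: "(A',B2) \<in> R" using k' k'e A2 by simp
    have k'R: "m A' \<notin> B2" "B2 \<subseteq> V" "A' \<subseteq> V"
      using k'R0 Rsub[OF k'R0] unfolding R_def by blast+
    have fin: "finite A'" "finite B2" using k'R V by (auto intro: finite_subset)
    show "p = par (k,False) \<or> p = par (k,True) \<or> (\<exists>k'\<in>R. \<exists>t. p = par (k',t) \<and> rk k < rk k')"
    proof (cases "A' = A")
      case True
      have "B \<subseteq> Some -` W'" using BW by auto
      moreover have "Some -` W' = (if t then insert (m A') B2 else B2)" using W' by auto
      ultimately have "B \<subseteq> B2" using kR(4) True by (cases t) auto
      show ?thesis
      proof (cases "B2 = B")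
        case True
        then have "k' = k" using ke k'e A2 \<open>A' = A\<close> by simp
        then show ?thesis using k' by (cases t) auto
      next
        case False
        then have "card B < card B2" using \<open>B \<subseteq> B2\<close> fin psubset_card_mono by blast
        then have "rk k < rk k'" using ke k'e A2 True by (simp add: rk_def)
        then show ?thesis using k' by blast
      qed
    next
      case False
      then have "card A < card A'" using AA' fin psubset_card_mono by blast
      then have "card A + 1 \<le> card A'" by simp
      then have "(card A + 1) * (card V + 1) \<le> card A' * (card V + 1)" by (rule mult_right_mono) simp
      moreover have "card B \<le> card V" using kR(3) V card_mono by blast
      ultimately have "card A * (card V + 1) + card B < card A' * (card V + 1) + card B2"
        by (simp add: algebra_simps)
      then have "rk k < rk k'" using ke k'e A2 by (simp add: rk_def)
      then show ?thesis using k' by blast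
    qed
  qed
  show ?thesis
    unfolding L by (rule collapse_param[OF V fR M inj disj pair rank])
qed

theorem mainTheorem8:
  fixes V :: "'v set" and E :: "('v \<times> 'v) set"
  assumes "finite V" and "E \<subseteq> V \<times> V" and "sym E"
  shows "same_simple_homotopy_type (nbhd_complex_geom V E) (hom_K2_geom V E)"
proof -
  define S :: "('v \<times> nat \<Rightarrow> real) set set \<Rightarrow> ('v \<times> nat \<Rightarrow> real) set set \<Rightarrow> bool"
    where "S = (\<lambda>A B. elementary_collapse A B \<or> elementary_collapse B A)"
  have c1: "collapses (Mg V E) (nbhd_complex_geom V E)" by (rule collapse_to_N[OF assms(1)])
  have c2: "collapses (Mg V E) (hom_K2_geom V E)" by (rule collapse_to_Hom[OF assms(1,2)])
  have mono: "collapses X Y \<Longrightarrow> S\<^sup>*\<^sup>* X Y" for X Y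
    by (erule rtranclp_mono[THEN predicate2D, rotated]) (auto simp: S_def)
  have symS: "S\<inverse>\<inverse> = S" by (auto simp: S_def fun_eq_iff)
  have "S\<^sup>*\<^sup>* (nbhd_complex_geom V E) (Mg V E)"
    using rtranclp_converseI[OF mono[OF c1]] symS by simp
  moreover have "S\<^sup>*\<^sup>* (Mg V E) (hom_K2_geom V E)" using mono[OF c2] .
  ultimately have "S\<^sup>*\<^sup>* (nbhd_complex_geom V E) (hom_K2_geom V E)" by (rule rtranclp_trans)
  then show ?thesis unfolding same_simple_homotopy_type_def S_def .
qed

end
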